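(* For generic values of the parameters $u,v\in\mathbb{C}$, the following holds for each $x\in\{l,r\}$. - Each of the two root subspaces (generalized eigenspaces) of $h^{cl}_x$ coincides with one of the two root subspaces of $M^{cl}(v)$. - Each of the two root subspaces of $h^{q}_x$ coincides with one of the two root subspaces of $M^{q}(v)$. In each case, the common root subspaces are each of dimension $N$, and on each of them the restriction of each matrix consists of a single Jordan block.
   Context: All matrices are $2N\times 2N$ complex matrices, indexed by $1,\dots,2N$. Entries not listed are zero, and only index pairs lying in $\{1,\dots,2N\}^2$ are meant. Here $\mathrm{i}$ is the imaginary unit, $s=1/\cosh(u)$, $\lambda_{cl}(v)=\tanh(v)\coth(u-v)$ and $\lambda_q(v)=\tanh(u-v)\coth(v)$. In all formulas $1\le i\le N$, $1\le j\le 2N$ and $k\ge 1$. The matrix $M^{cl}(v)$ is lower triangular, with entries - $M^{cl}_{2i-1,2i-1}=-\mathrm{i}\coth(u-v)$ and $M^{cl}_{2i,2i}=\mathrm{i}\tanh(v)$; - $M^{cl}_{2i-1+2k,\,2i-1}=-\mathrm{i}\,\lambda_{cl}^{k-1}/(\coth(v)\sinh^2(u-v))$; - $M^{cl}_{2i+2k,\,2i}=-\mathrm{i}\,\lambda_{cl}^{k-1}/(\tanh(u-v)\cosh^2(v))$; - $M^{cl}_{j+2k-1,\,j}=-\mathrm{i}\,\lambda_{cl}^{k-1}/(\cosh(v)\sinh(u-v))$. The matrix $M^{q}(v)$ is upper triangular, with entries - $M^{q}_{2i-1,2i-1}=-\mathrm{i}\tanh(u-v)$ and $M^{q}_{2i,2i}=\mathrm{i}\coth(v)$;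 - $M^{q}_{2i-1,\,2i-1+2k}=\mathrm{i}\,\lambda_q^{k-1}/(\tanh(v)\cosh^2(u-v))$; - $M^{q}_{2i,\,2i+2k}=\mathrm{i}\,\lambda_q^{k-1}/(\coth(u-v)\sinh^2(v))$; - $M^{q}_{j,\,j+2k-1}=\mathrm{i}\,\lambda_q^{k-1}/(\sinh(v)\cosh(u-v))$. The local matrices have entries (with $1\le j\le 2N-1$ wherever $j$ appears): - $h^{cl}_l$: $(h^{cl}_l)_{2i,2i}=1$ for $1\le i\le N$; $(h^{cl}_l)_{j+1,j}=-s$; $(h^{cl}_l)_{2i+1,2i-1}=1$ for $1\le i\le N-1$. - $h^{q}_l$: $(h^{q}_l)_{2i,2i}=1$; $(h^{q}_l)_{j,j+1}=s$; $(h^{q}_l)_{2i-1,2i+1}=1$ for $1\le i\le N-1$. - $h^{cl}_r$: $(h^{cl}_r)_{2i-1,2i-1}=1$; $(h^{cl}_r)_{j+1,j}=s$; $(h^{cl}_r)_{2i+2,2i}=1$ for $1\le i\le N-1$. - $h^{q}_r$: $(h^{q}_r)_{2i-1,2i-1}=1$; $(h^{q}_r)_{j,j+1}=-s$; $(h^{q}_r)_{2i,2i+2}=1$ for $1\le i\le N-1$. *)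

theory Defs
  imports "Jordan_Normal_Form.Jordan_Normal_Form_Uniqueness" "HOL-Analysis.Elementary_Topology"
begin

definition coth :: "complex \<Rightarrow> complex" where
  "coth x = cosh x / sinh x"

definition mat1 :: "nat \<Rightarrow> (nat \<Rightarrow> nat \<Rightarrow> complex) \<Rightarrow> complex mat" where
  "mat1 N f = mat (2*N) (2*N) (\<lambda>(a,b). f (a+1) (b+1))"

definition s_par :: "complex \<Rightarrow> complex" where
  "s_par u = 1 / cosh u"

definition lam_cl :: "complex \<Rightarrow> complex \<Rightarrow> complex" where
  "lam_cl u v = tanh v * coth (u - v)"

definition lam_q :: "complex \<Rightarrow> complex \<Rightarrow> complex" where
  "lam_q u v = tanh (u - v) * coth v"

definition Mcl :: "nat \<Rightarrow> complex \<Rightarrow> complex \<Rightarrow> complex mat" where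
  "Mcl N u v = mat1 N (\<lambda>a b.
     if a = b then (if odd b then - \<i> * coth (u - v) else \<i> * tanh v)
     else if b < a \<and> even (a - b) then
       (let k = (a - b) div 2 in
        if odd b then - \<i> * lam_cl u v ^ (k - 1) / (coth v * sinh (u - v) ^ 2)
        else - \<i> * lam_cl u v ^ (k - 1) / (tanh (u - v) * cosh v ^ 2))
     else if b < a \<and> odd (a - b) then
       (let k = (a - b + 1) div 2 in
        - \<i> * lam_cl u v ^ (k - 1) / (cosh v * sinh (u - v)))
     else 0)"

definition Mq :: "nat \<Rightarrow> complex \<Rightarrow> complex \<Rightarrow> complex mat" where
  "Mq N u v = mat1 N (\<lambda>a b.
     if a = b then (if odd a then - \<i> * tanh (u - v) else \<i> * coth v)
     else if a < b \<and> even (b - a) then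
       (let k = (b - a) div 2 in
        if odd a then \<i> * lam_q u v ^ (k - 1) / (tanh v * cosh (u - v) ^ 2)
        else \<i> * lam_q u v ^ (k - 1) / (coth (u - v) * sinh v ^ 2))
     else if a < b \<and> odd (b - a) then
       (let k = (b - a + 1) div 2 in
        \<i> * lam_q u v ^ (k - 1) / (sinh v * cosh (u - v)))
     else 0)"

definition hcl_l :: "nat \<Rightarrow> complex \<Rightarrow> complex mat" where
  "hcl_l N u = mat1 N (\<lambda>a b.
     if a = b then (if even a then 1 else 0)
     else if a = b + 1 then - s_par u
     else if a = b + 2 \<and> odd b then 1 else 0)"

definition hq_l :: "nat \<Rightarrow> complex \<Rightarrow> complex mat" where
  "hq_l N u = mat1 N (\<lambda>a b.
     if a = b then (if even a then 1 else 0)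
     else if b = a + 1 then s_par u
     else if b = a + 2 \<and> odd a then 1 else 0)"

definition hcl_r :: "nat \<Rightarrow> complex \<Rightarrow> complex mat" where
  "hcl_r N u = mat1 N (\<lambda>a b.
     if a = b then (if odd a then 1 else 0)
     else if a = b + 1 then s_par u
     else if a = b + 2 \<and> even b then 1 else 0)"

definition hq_r :: "nat \<Rightarrow> complex \<Rightarrow> complex mat" where
  "hq_r N u = mat1 N (\<lambda>a b.
     if a = b then (if odd a then 1 else 0)
     else if b = a + 1 then - s_par u
     else if b = a + 2 \<and> even a then 1 else 0)"

definition root_subspace :: "complex mat \<Rightarrow> complex \<Rightarrow> complex vec set" where
  "root_subspace A e = mat_kernel ((char_matrix A e) ^\<^sub>m (dim_row A))"

definition root_match :: "nat \<Rightarrow> complex mat \<Rightarrow> complex mat \<Rightarrow> bool" where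
  "root_match N h M \<longleftrightarrow>
     card {e. eigenvalue h e} = 2 \<and> card {e. eigenvalue M e} = 2 \<and>
     (\<forall>e. eigenvalue h e \<longrightarrow>
        (\<exists>\<mu>. eigenvalue M \<mu> \<and> root_subspace h e = root_subspace M \<mu> \<and>
             dim_gen_eigenspace h e (2*N) = N \<and> dim_gen_eigenspace M \<mu> (2*N) = N \<and>
             (\<forall>n_as. jordan_nf h n_as \<longrightarrow> [p \<leftarrow> n_as. snd p = e] = [(N, e)]) \<and>
             (\<forall>n_as. jordan_nf M n_as \<longrightarrow> [p \<leftarrow> n_as. snd p = \<mu>] = [(N, \<mu>)])))"

definition generic2 :: "(complex \<Rightarrow> complex \<Rightarrow> bool) \<Rightarrow> bool" where
  "generic2 P \<longleftrightarrow> (\<exists>S :: (complex \<times> complex) set. closed S \<and> interior S = {} \<and>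
      (\<forall>u v. (u, v) \<notin> S \<longrightarrow> P u v))"

end

theory Submission imports Defs "Jordan_Normal_Form.Jordan_Normal_Form_Existence" begin

lemma sum_col3:
  fixes f :: "nat \<Rightarrow> 'a::comm_monoid_add" and j n :: nat
  assumes "j < n" and "\<And>k. k < n \<Longrightarrow> k \<noteq> j \<Longrightarrow> k \<noteq> j+1 \<Longrightarrow> k \<noteq> j+2 \<Longrightarrow> f k = (0::'a::comm_monoid_add)"
  shows "(\<Sum>k\<in>{0..<n}. f k) = f j + (if j+1 < n then f (j+1) else 0) + (if j+2 < n then f (j+2) else 0)"
proof -
  have "(\<Sum>k\<in>{0..<n}. f k) = (\<Sum>k\<in>{k. k<n \<and> (k=j \<or> k=j+1 \<or> k=j+2)}. f k)"
    by (rule sum.mono_neutral_right) (use assms in auto)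
  also have "\<dots> = f j + (if j+1 < n then f (j+1) else 0) + (if j+2 < n then f (j+2) else 0)"
  proof (cases "j+2 < n")
    case True
    hence "{k. k<n \<and> (k=j \<or> k=j+1 \<or> k=j+2)} = {j, j+1, j+2}" by auto
    thus ?thesis using True by (simp add: add.assoc)
  next
    case False
    show ?thesis
    proof (cases "j+1 < n")
      case True
      hence "{k. k<n \<and> (k=j \<or> k=j+1 \<or> k=j+2)} = {j, j+1}" using False by auto
      thus ?thesis using True False by simp
    next
      case False2: False
      hence "{k. k<n \<and> (k=j \<or> k=j+1 \<or> k=j+2)} = {j}" using False assms(1) by auto
      thus ?thesis using False False2 by simp
    qed
  qed
  finally show ?thesis .
qed

lemma sum_row3:
  fixes f :: "nat \<Rightarrow> 'a::comm_monoid_add" and i n :: nat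
  assumes "i < n" and "\<And>k. k < n \<Longrightarrow> k \<noteq> i \<Longrightarrow> k+1 \<noteq> i \<Longrightarrow> k+2 \<noteq> i \<Longrightarrow> f k = (0::'a::comm_monoid_add)"
  shows "(\<Sum>k\<in>{0..<n}. f k) = f i + (if 1 \<le> i then f (i-1) else 0) + (if 2 \<le> i then f (i-2) else 0)"
proof -
  have "(\<Sum>k\<in>{0..<n}. f k) = (\<Sum>k\<in>{k. k<n \<and> (k=i \<or> k+1=i \<or> k+2=i)}. f k)"
    by (rule sum.mono_neutral_right) (use assms in auto)
  also have "\<dots> = f i + (if 1 \<le> i then f (i-1) else 0) + (if 2 \<le> i then f (i-2) else 0)"
  proof (cases i)
    case 0
    hence "{k. k<n \<and> (k=i \<or> k+1=i \<or> k+2=i)} = {i}" using assms(1) by auto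
    thus ?thesis using 0 by simp
  next
    case (Suc i1)
    show ?thesis
    proof (cases i1)
      case 0
      hence "{k. k<n \<and> (k=i \<or> k+1=i \<or> k+2=i)} = {1, 0}" using assms(1) Suc by auto
      thus ?thesis using Suc 0 by simp
    next
      case (Suc i2)
      hence "{k. k<n \<and> (k=i \<or> k+1=i \<or> k+2=i)} = {i, i-1, i-2}" using assms(1) \<open>i = Suc i1\<close> by auto
      thus ?thesis using Suc \<open>i = Suc i1\<close> by (simp add: add.assoc)
    qed
  qed
  finally show ?thesis .
qed

lemma mult_entry:
  assumes "A \<in> carrier_mat n n" "B \<in> carrier_mat n n" "i < n" "j < n"
  shows "(A * B) $$ (i,j) = (\<Sum>k\<in>{0..<n}. A $$ (i,k) * B $$ (k,j))"
  using assms by (simp add: scalar_prod_def)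

lemma mult_vec_entry:
  assumes "A \<in> carrier_mat n n" "x \<in> carrier_vec n" "i < n"
  shows "(A *\<^sub>v x) $ i = (\<Sum>k\<in>{0..<n}. A $$ (i,k) * x $ k)"
  using assms by (simp add: scalar_prod_def)

definition Tlo :: "nat \<Rightarrow> complex mat" where
  "Tlo n = mat n n (\<lambda>(i,j). if i = j + 2 then 1 else 0)"

lemma Tlo_carrier[simp]: "Tlo n \<in> carrier_mat n n" by (simp add: Tlo_def)
lemma Tlo_dim[simp]: "dim_row (Tlo n) = n" "dim_col (Tlo n) = n" by (simp_all add: Tlo_def)
lemma Tlo_idx[simp]: "i < n \<Longrightarrow> j < n \<Longrightarrow> Tlo n $$ (i,j) = (if i = j + 2 then 1 else 0)"
  by (simp add: Tlo_def)

lemma Tlo_mult_entry: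
  assumes "A \<in> carrier_mat n n" "i < n" "j < n"
  shows "(Tlo n * A) $$ (i,j) = (if 2 \<le> i then A $$ (i-2, j) else 0)"
proof -
  have "(Tlo n * A) $$ (i,j) = (\<Sum>k\<in>{0..<n}. Tlo n $$ (i,k) * A $$ (k,j))"
    by (rule mult_entry) (use assms in auto)
  also have "\<dots> = Tlo n $$ (i,i) * A $$ (i,j) + (if 1 \<le> i then Tlo n $$ (i,i-1) * A $$ (i-1,j) else 0)
     + (if 2 \<le> i then Tlo n $$ (i,i-2) * A $$ (i-2,j) else 0)"
    by (rule sum_row3[where f = "\<lambda>k. Tlo n $$ (i,k) * A $$ (k,j)"]) (use assms in auto)
  finally show ?thesis using assms by auto
qed

lemma mult_Tlo_entry:
  assumes "A \<in> carrier_mat n n" "i < n" "j < n"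
  shows "(A * Tlo n) $$ (i,j) = (if j + 2 < n then A $$ (i, j+2) else 0)"
proof -
  have "(A * Tlo n) $$ (i,j) = (\<Sum>k\<in>{0..<n}. A $$ (i,k) * Tlo n $$ (k,j))"
    by (rule mult_entry) (use assms in auto)
  also have "\<dots> = A $$ (i,j) * Tlo n $$ (j,j) + (if j+1 < n then A $$ (i,j+1) * Tlo n $$ (j+1,j) else 0)
     + (if j+2 < n then A $$ (i,j+2) * Tlo n $$ (j+2,j) else 0)"
    by (rule sum_col3[where f = "\<lambda>k. A $$ (i,k) * Tlo n $$ (k,j)"]) (use assms in auto)
  finally show ?thesis using assms by auto
qed

definition hL :: "nat \<Rightarrow> complex \<Rightarrow> complex mat" where
  "hL n s = mat n n (\<lambda>(i,j). if i = j then (if odd i then 1 else 0) else if i = j+1 then - s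
      else if i = j+2 \<and> even j then 1 else 0)"

definition hR :: "nat \<Rightarrow> complex \<Rightarrow> complex mat" where
  "hR n s = mat n n (\<lambda>(i,j). if i = j then (if even i then 1 else 0) else if i = j+1 then s
      else if i = j+2 \<and> odd j then 1 else 0)"

lemma hL_carrier[simp]: "hL n s \<in> carrier_mat n n" by (simp add: hL_def)
lemma hR_carrier[simp]: "hR n s \<in> carrier_mat n n" by (simp add: hR_def)
lemma hL_dim[simp]: "dim_row (hL n s) = n" "dim_col (hL n s) = n" by (simp_all add: hL_def)
lemma hR_dim[simp]: "dim_row (hR n s) = n" "dim_col (hR n s) = n" by (simp_all add: hR_def)
lemma hL_idx[simp]: "i < n \<Longrightarrow> j < n \<Longrightarrow> hL n s $$ (i,j) = (if i = j then (if odd i then 1 else 0) else if i = j+1 then - s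
      else if i = j+2 \<and> even j then 1 else 0)" by (simp add: hL_def)
lemma hR_idx[simp]: "i < n \<Longrightarrow> j < n \<Longrightarrow> hR n s $$ (i,j) = (if i = j then (if even i then 1 else 0) else if i = j+1 then s
      else if i = j+2 \<and> odd j then 1 else 0)" by (simp add: hR_def)

lemma hcl_l_eq: "hcl_l N u = hL (2*N) (s_par u)"
  by (rule eq_matI) (auto simp: hcl_l_def mat1_def)

lemma hcl_r_eq: "hcl_r N u = hR (2*N) (s_par u)"
  by (rule eq_matI) (auto simp: hcl_r_def mat1_def)

lemma hL_sq_entry:
  assumes "i < n" "j < n"
  shows "(hL n s * hL n s) $$ (i,j) = hL n s $$ (i,j) * hL n s $$ (j,j)
     + (if j+1 < n then hL n s $$ (i,j+1) * hL n s $$ (j+1,j) else 0)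
     + (if j+2 < n then hL n s $$ (i,j+2) * hL n s $$ (j+2,j) else 0)"
proof -
  have "(hL n s * hL n s) $$ (i,j) = (\<Sum>k\<in>{0..<n}. hL n s $$ (i,k) * hL n s $$ (k,j))"
    by (rule mult_entry) (use assms in auto)
  also have "\<dots> = hL n s $$ (i,j) * hL n s $$ (j,j)
     + (if j+1 < n then hL n s $$ (i,j+1) * hL n s $$ (j+1,j) else 0)
     + (if j+2 < n then hL n s $$ (i,j+2) * hL n s $$ (j+2,j) else 0)"
    by (rule sum_col3[where f = "\<lambda>k. hL n s $$ (i,k) * hL n s $$ (k,j)"]) (use assms in auto)
  finally show ?thesis .
qed

lemma hR_sq_entry:
  assumes "i < n" "j < n"
  shows "(hR n s * hR n s) $$ (i,j) = hR n s $$ (i,j) * hR n s $$ (j,j)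
     + (if j+1 < n then hR n s $$ (i,j+1) * hR n s $$ (j+1,j) else 0)
     + (if j+2 < n then hR n s $$ (i,j+2) * hR n s $$ (j+2,j) else 0)"
proof -
  have "(hR n s * hR n s) $$ (i,j) = (\<Sum>k\<in>{0..<n}. hR n s $$ (i,k) * hR n s $$ (k,j))"
    by (rule mult_entry) (use assms in auto)
  also have "\<dots> = hR n s $$ (i,j) * hR n s $$ (j,j)
     + (if j+1 < n then hR n s $$ (i,j+1) * hR n s $$ (j+1,j) else 0)
     + (if j+2 < n then hR n s $$ (i,j+2) * hR n s $$ (j+2,j) else 0)"
    by (rule sum_col3[where f = "\<lambda>k. hR n s $$ (i,k) * hR n s $$ (k,j)"]) (use assms in auto)
  finally show ?thesis .
qed

lemma cases_diff: fixes i j :: nat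
  obtains "i < j" | "i = j" | "i = j+1" | "i = j+2" | "i = j+3" | "i = j+4" | "j + 5 \<le> i"
  by linarith

lemma hL_E1:
  shows "Tlo n * ((1 - s^2) \<cdot>\<^sub>m 1\<^sub>m n - hL n s) = hL n s - hL n s * hL n s"
proof (rule eq_matI)
  fix i j assume ij: "i < dim_row (hL n s - hL n s * hL n s)" "j < dim_col (hL n s - hL n s * hL n s)"
  hence i: "i < n" and j: "j < n" by auto
  have L: "(Tlo n * ((1 - s^2) \<cdot>\<^sub>m 1\<^sub>m n - hL n s)) $$ (i,j) =
     (if 2 \<le> i then ((1 - s^2) \<cdot>\<^sub>m 1\<^sub>m n - hL n s) $$ (i-2,j) else 0)"
    by (rule Tlo_mult_entry) (use i j in auto)
  have R: "(hL n s - hL n s * hL n s) $$ (i,j) = hL n s $$ (i,j) - (hL n s * hL n s) $$ (i,j)"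
    by (rule index_minus_mat) (use i j in auto)
  note sq = hL_sq_entry[OF i j]
  show "(Tlo n * ((1 - s^2) \<cdot>\<^sub>m 1\<^sub>m n - hL n s)) $$ (i,j) = (hL n s - hL n s * hL n s) $$ (i,j)"
    unfolding L R sq using i j
    by (cases i j rule: cases_diff) (auto simp: power2_eq_square algebra_simps)
qed auto

lemma hR_E1:
  shows "Tlo n * ((1 - s^2) \<cdot>\<^sub>m 1\<^sub>m n - hR n s) = hR n s - hR n s * hR n s"
proof (rule eq_matI)
  fix i j assume ij: "i < dim_row (hR n s - hR n s * hR n s)" "j < dim_col (hR n s - hR n s * hR n s)"
  hence i: "i < n" and j: "j < n" by auto
  have L: "(Tlo n * ((1 - s^2) \<cdot>\<^sub>m 1\<^sub>m n - hR n s)) $$ (i,j) =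
     (if 2 \<le> i then ((1 - s^2) \<cdot>\<^sub>m 1\<^sub>m n - hR n s) $$ (i-2,j) else 0)"
    by (rule Tlo_mult_entry) (use i j in auto)
  have R: "(hR n s - hR n s * hR n s) $$ (i,j) = hR n s $$ (i,j) - (hR n s * hR n s) $$ (i,j)"
    by (rule index_minus_mat) (use i j in auto)
  note sq = hR_sq_entry[OF i j]
  show "(Tlo n * ((1 - s^2) \<cdot>\<^sub>m 1\<^sub>m n - hR n s)) $$ (i,j) = (hR n s - hR n s * hR n s) $$ (i,j)"
    unfolding L R sq using i j
    by (cases i j rule: cases_diff) (auto simp: power2_eq_square algebra_simps)
qed auto

lemma hL_E3: "hL n s * Tlo n = Tlo n * hL n s"
proof (rule eq_matI)
  fix i j assume "i < dim_row (Tlo n * hL n s)" "j < dim_col (Tlo n * hL n s)"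
  hence i: "i < n" and j: "j < n" by auto
  show "(hL n s * Tlo n) $$ (i,j) = (Tlo n * hL n s) $$ (i,j)"
    unfolding mult_Tlo_entry[OF hL_carrier i j] Tlo_mult_entry[OF hL_carrier i j] using i j
    by (cases i j rule: cases_diff) auto
qed auto

lemma hR_E3: "hR n s * Tlo n = Tlo n * hR n s"
proof (rule eq_matI)
  fix i j assume "i < dim_row (Tlo n * hR n s)" "j < dim_col (Tlo n * hR n s)"
  hence i: "i < n" and j: "j < n" by auto
  show "(hR n s * Tlo n) $$ (i,j) = (Tlo n * hR n s) $$ (i,j)"
    unfolding mult_Tlo_entry[OF hR_carrier i j] Tlo_mult_entry[OF hR_carrier i j] using i j
    by (cases i j rule: cases_diff) auto
qed auto

definition MG :: "nat \<Rightarrow> complex \<Rightarrow> complex \<Rightarrow> complex \<Rightarrow> complex \<Rightarrow> complex \<Rightarrow> complex \<Rightarrow> complex mat" where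
  "MG n al be A D C lam = mat n n (\<lambda>(i,j). if i < j then 0 else if i = j then (if even j then al else be)
     else if even (i - j) then (if even j then A else D) * lam ^ ((i - j) div 2 - 1)
     else C * lam ^ ((i - j - 1) div 2))"

lemma MG_carrier[simp]: "MG n al be A D C lam \<in> carrier_mat n n" by (simp add: MG_def)
lemma MG_dim[simp]: "dim_row (MG n al be A D C lam) = n" "dim_col (MG n al be A D C lam) = n"
  by (simp_all add: MG_def)
lemma MG_idx[simp]: "i < n \<Longrightarrow> j < n \<Longrightarrow> MG n al be A D C lam $$ (i,j) =
   (if i < j then 0 else if i = j then (if even j then al else be)
     else if even (i - j) then (if even j then A else D) * lam ^ ((i - j) div 2 - 1)
     else C * lam ^ ((i - j - 1) div 2))" by (simp add: MG_def)

lemma MG_geom: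
  assumes "i < n" "j + 3 \<le> i"
  shows "MG n al be A D C lam $$ (i,j) = lam * MG n al be A D C lam $$ (i,j+2)"
proof -
  obtain d where d: "i = j + 3 + d" using assms(2) by (metis add.commute le_iff_add)
  show ?thesis
  proof (cases "even d")
    case True
    then obtain t where t: "d = 2*t" by blast
    have e1: "i - j = 2*t+3" "i - (j+2) = 2*t+1" using d t by auto
    have e2: "(2*t+3-1) div 2 = Suc t" "(2*t+1-1) div 2 = t" by auto
    show ?thesis using assms d e1 e2 by auto
  next
    case False
    then obtain t where t: "d = 2*t+1" by (metis oddE)
    have e1: "i - j = 2*t+4" "i - (j+2) = 2*t+2" using d t by auto
    have e2: "(2*t+4) div 2 - 1 = Suc t" "(2*t+2) div 2 - 1 = t" by auto
    show ?thesis using assms d e1 e2 by auto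
  qed
qed

lemma Zmat_idx: "k < n \<Longrightarrow> j < n \<Longrightarrow> (1\<^sub>m n - lam \<cdot>\<^sub>m Tlo n) $$ (k,j) =
   (if k = j then 1 else 0) - (if k = j + 2 then lam else 0)"
  by simp

lemma MG_Z_entry:
  assumes "i < n" "j < n"
  shows "(MG n al be A D C lam * (1\<^sub>m n - lam \<cdot>\<^sub>m Tlo n)) $$ (i,j) =
    MG n al be A D C lam $$ (i,j) - (if j + 2 < n then lam * MG n al be A D C lam $$ (i,j+2) else 0)"
proof -
  let ?M = "MG n al be A D C lam" and ?Z = "1\<^sub>m n - lam \<cdot>\<^sub>m Tlo n"
  have "(?M * ?Z) $$ (i,j) = (\<Sum>k\<in>{0..<n}. ?M $$ (i,k) * ?Z $$ (k,j))"
    by (rule mult_entry) (use assms in auto)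
  also have "\<dots> = ?M $$ (i,j) * ?Z $$ (j,j)
     + (if j+1 < n then ?M $$ (i,j+1) * ?Z $$ (j+1,j) else 0)
     + (if j+2 < n then ?M $$ (i,j+2) * ?Z $$ (j+2,j) else 0)"
    by (rule sum_col3[where f = "\<lambda>k. ?M $$ (i,k) * ?Z $$ (k,j)"]) (use assms in \<open>auto simp del: MG_idx\<close>)
  also have "\<dots> = ?M $$ (i,j) - (if j + 2 < n then lam * ?M $$ (i,j+2) else 0)"
    using assms by (simp only: Zmat_idx) (auto simp del: MG_idx)
  finally show ?thesis .
qed

lemma MG_E2L:
  assumes C: "C = - (be - al) * s" and A: "A - lam * al = be" and D: "D - lam * be = al"
  shows "MG n al be A D C lam * (1\<^sub>m n - lam \<cdot>\<^sub>m Tlo n) = al \<cdot>\<^sub>m (1\<^sub>m n + Tlo n) + (be - al) \<cdot>\<^sub>m hL n s"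
proof (rule eq_matI)
  fix i j assume "i < dim_row (al \<cdot>\<^sub>m (1\<^sub>m n + Tlo n) + (be - al) \<cdot>\<^sub>m hL n s)"
    "j < dim_col (al \<cdot>\<^sub>m (1\<^sub>m n + Tlo n) + (be - al) \<cdot>\<^sub>m hL n s)"
  hence i: "i < n" and j: "j < n" by auto
  let ?M = "MG n al be A D C lam"
  have G: "j + 3 \<le> i \<Longrightarrow> ?M $$ (i,j) = lam * ?M $$ (i,j+2)" by (rule MG_geom[OF i])
  show "(?M * (1\<^sub>m n - lam \<cdot>\<^sub>m Tlo n)) $$ (i,j) = (al \<cdot>\<^sub>m (1\<^sub>m n + Tlo n) + (be - al) \<cdot>\<^sub>m hL n s) $$ (i,j)"
    unfolding MG_Z_entry[OF i j]
  proof (cases "j + 3 \<le> i")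
    case True
    thus "?M $$ (i,j) - (if j + 2 < n then lam * ?M $$ (i,j+2) else 0) =
       (al \<cdot>\<^sub>m (1\<^sub>m n + Tlo n) + (be - al) \<cdot>\<^sub>m hL n s) $$ (i,j)"
      using G i j by (simp del: MG_idx)
  next
    case False
    hence "i < j \<or> i = j \<or> i = j + 1 \<or> i = j + 2" by linarith
    thus "?M $$ (i,j) - (if j + 2 < n then lam * ?M $$ (i,j+2) else 0) =
       (al \<cdot>\<^sub>m (1\<^sub>m n + Tlo n) + (be - al) \<cdot>\<^sub>m hL n s) $$ (i,j)"
      using i j C A D by (elim disjE) (auto simp: algebra_simps)
  qed
qed auto

lemma MG_E2R:
  assumes C: "C = (al - be) * s" and A: "A - lam * al = be" and D: "D - lam * be = al"
  shows "MG n al be A D C lam * (1\<^sub>m n - lam \<cdot>\<^sub>m Tlo n) = be \<cdot>\<^sub>m (1\<^sub>m n + Tlo n) + (al - be) \<cdot>\<^sub>m hR n s"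
proof (rule eq_matI)
  fix i j assume "i < dim_row (be \<cdot>\<^sub>m (1\<^sub>m n + Tlo n) + (al - be) \<cdot>\<^sub>m hR n s)"
    "j < dim_col (be \<cdot>\<^sub>m (1\<^sub>m n + Tlo n) + (al - be) \<cdot>\<^sub>m hR n s)"
  hence i: "i < n" and j: "j < n" by auto
  let ?M = "MG n al be A D C lam"
  have G: "j + 3 \<le> i \<Longrightarrow> ?M $$ (i,j) = lam * ?M $$ (i,j+2)" by (rule MG_geom[OF i])
  show "(?M * (1\<^sub>m n - lam \<cdot>\<^sub>m Tlo n)) $$ (i,j) = (be \<cdot>\<^sub>m (1\<^sub>m n + Tlo n) + (al - be) \<cdot>\<^sub>m hR n s) $$ (i,j)"
    unfolding MG_Z_entry[OF i j]
  proof (cases "j + 3 \<le> i")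
    case True
    thus "?M $$ (i,j) - (if j + 2 < n then lam * ?M $$ (i,j+2) else 0) =
       (be \<cdot>\<^sub>m (1\<^sub>m n + Tlo n) + (al - be) \<cdot>\<^sub>m hR n s) $$ (i,j)"
      using G i j by (simp del: MG_idx)
  next
    case False
    hence "i < j \<or> i = j \<or> i = j + 1 \<or> i = j + 2" by linarith
    thus "?M $$ (i,j) - (if j + 2 < n then lam * ?M $$ (i,j+2) else 0) =
       (be \<cdot>\<^sub>m (1\<^sub>m n + Tlo n) + (al - be) \<cdot>\<^sub>m hR n s) $$ (i,j)"
      using i j C A D by (elim disjE) (auto simp: algebra_simps)
  qed
qed auto


context fixes n :: nat
begin

lemma nassoc: "A \<in> carrier_mat n n \<Longrightarrow> B \<in> carrier_mat n n \<Longrightarrow> C \<in> carrier_mat n n \<Longrightarrow> A * B * C = A * (B * C)"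
  for A B C :: "complex mat" by (rule assoc_mult_mat)

lemma nrules:
  fixes A B C :: "complex mat"
  assumes "A \<in> carrier_mat n n" "B \<in> carrier_mat n n" "C \<in> carrier_mat n n"
  shows "(A + B) * C = A * C + B * C" "A * (B + C) = A * B + A * C" "(A - B) * C = A * C - B * C"
    "A * (B - C) = A * B - A * C" "A * (k \<cdot>\<^sub>m B) = k \<cdot>\<^sub>m (A * B)" "(k \<cdot>\<^sub>m A) * B = k \<cdot>\<^sub>m (A * B)"
  using assms by (auto simp: add_mult_distrib_mat[of _ n n] mult_add_distrib_mat[of _ n n]
    minus_mult_distrib_mat[of _ n n] mult_minus_distrib_mat[of _ n n] mult_smult_distrib[of _ n n]
    mult_smult_assoc_mat[of _ n n])

lemma nrules1:
  fixes A B :: "complex mat"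
  assumes "A \<in> carrier_mat n n" "B \<in> carrier_mat n n"
  shows "(A + B) * A = A * A + B * A" "A * (k \<cdot>\<^sub>m B) = k \<cdot>\<^sub>m (A * B)" "(k \<cdot>\<^sub>m A) * B = k \<cdot>\<^sub>m (A * B)"
    "A * (k \<cdot>\<^sub>m 1\<^sub>m n) = k \<cdot>\<^sub>m A" "(k \<cdot>\<^sub>m 1\<^sub>m n) * A = k \<cdot>\<^sub>m A"
  using assms by (auto simp: add_mult_distrib_mat[of _ n n] mult_smult_distrib[of _ n n]
    mult_smult_assoc_mat[of _ n n])


lemma inv_exists:
  fixes A :: "complex mat"
  assumes A: "A \<in> carrier_mat n n" and d: "det A \<noteq> 0"
  obtains B where "B \<in> carrier_mat n n" "A * B = 1\<^sub>m n" "B * A = 1\<^sub>m n"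
proof -
  have "A \<in> Units (ring_mat TYPE(complex) n ())" by (rule det_non_zero_imp_unit[OF A d])
  thus ?thesis using that unfolding Units_def ring_mat_def by auto
qed

lemma pow_comm:
  fixes A B :: "complex mat"
  assumes A: "A \<in> carrier_mat n n" and B: "B \<in> carrier_mat n n" and c: "A * B = B * A"
  shows "A ^\<^sub>m k * B = B * A ^\<^sub>m k"
proof (induction k)
  case 0
  show ?case using A B by simp
next
  case (Suc k)
  have Ak: "A ^\<^sub>m k \<in> carrier_mat n n" using A by simp
  have "A ^\<^sub>m Suc k * B = A ^\<^sub>m k * (A * B)" using nassoc[OF Ak A B] by simp
  also have "\<dots> = (A ^\<^sub>m k * B) * A" unfolding c using nassoc[OF Ak B A] by simp
  also have "\<dots> = B * A ^\<^sub>m k * A" using Suc by simp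
  also have "\<dots> = B * A ^\<^sub>m Suc k" using nassoc[OF B Ak A] by simp
  finally show ?case .
qed

lemma pow_mult_comm:
  fixes A B :: "complex mat"
  assumes A: "A \<in> carrier_mat n n" and B: "B \<in> carrier_mat n n" and c: "A * B = B * A"
  shows "(A * B) ^\<^sub>m k = A ^\<^sub>m k * B ^\<^sub>m k"
proof (induction k)
  case 0
  show ?case using A B by simp
next
  case (Suc k)
  have Ak: "A ^\<^sub>m k \<in> carrier_mat n n" and Bk: "B ^\<^sub>m k \<in> carrier_mat n n" using A B by auto
  have AkBk: "A ^\<^sub>m k * B ^\<^sub>m k \<in> carrier_mat n n" using Ak Bk by auto
  have pc: "B ^\<^sub>m k * A = A * B ^\<^sub>m k" using pow_comm[OF B A c[symmetric]] by simp
  have "(A * B) ^\<^sub>m Suc k = (A ^\<^sub>m k * B ^\<^sub>m k) * (A * B)" using Suc by simp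
  also have "\<dots> = A ^\<^sub>m k * (B ^\<^sub>m k * (A * B))" by (rule nassoc[OF Ak Bk]) (use A B in simp)
  also have "\<dots> = A ^\<^sub>m k * ((B ^\<^sub>m k * A) * B)" by (simp only: nassoc[OF Bk A B])
  also have "\<dots> = A ^\<^sub>m k * ((A * B ^\<^sub>m k) * B)" unfolding pc ..
  also have "\<dots> = (A ^\<^sub>m k * A) * (B ^\<^sub>m k * B)"
    using nassoc[OF A Bk B] nassoc[OF Ak A, of "B ^\<^sub>m k * B"] Bk B by simp
  also have "\<dots> = A ^\<^sub>m Suc k * B ^\<^sub>m Suc k" by simp
  finally show ?case .
qed

lemma kernel_eq_of_factor:
  fixes X Y P Q :: "complex mat"
  assumes X: "X \<in> carrier_mat n n" and Y: "Y \<in> carrier_mat n n"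
    and P: "P \<in> carrier_mat n n" and Q: "Q \<in> carrier_mat n n"
    and XP: "X * P = Y * Q" and PY: "P * Y = Y * P" and QY: "Q * Y = Y * Q"
    and dP: "det P \<noteq> 0" and dQ: "det Q \<noteq> 0"
  shows "mat_kernel (X ^\<^sub>m k) = mat_kernel (Y ^\<^sub>m k)"
proof -
  obtain P' where P': "P' \<in> carrier_mat n n" "P * P' = 1\<^sub>m n" "P' * P = 1\<^sub>m n"
    using inv_exists[OF P dP] by blast
  obtain Q' where Q': "Q' \<in> carrier_mat n n" "Q * Q' = 1\<^sub>m n" "Q' * Q = 1\<^sub>m n"
    using inv_exists[OF Q dQ] by blast
  define G where "G = Q * P'"
  define G' where "G' = P * Q'"
  have G: "G \<in> carrier_mat n n" "G' \<in> carrier_mat n n" using P' Q' P Q unfolding G_def G'_def by auto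
  have "X = X * (P * P')" using X P' by simp
  also have "\<dots> = (X * P) * P'" using nassoc[OF X P P'(1)] by simp
  also have "\<dots> = Y * G" unfolding XP G_def using nassoc[OF Y Q P'(1)] by simp
  finally have XYG: "X = Y * G" .
  have P'Y: "P' * Y = Y * P'"
  proof -
    have "P' * Y = (P' * Y) * (P * P')" using P' Y by simp
    also have "\<dots> = P' * (Y * P) * P'"
      using nassoc[OF P'(1) Y P] nassoc[OF _ P P'(1), of "P' * Y"] P'(1) Y by simp
    also have "\<dots> = (P' * P) * Y * P'" unfolding PY[symmetric] using nassoc[OF P'(1) P Y] by simp
    also have "\<dots> = Y * P'" using P' Y by simp
    finally show ?thesis .
  qed
  have GY: "G * Y = Y * G"
  proof -
    have "G * Y = Q * (P' * Y)" unfolding G_def using nassoc[OF Q P'(1) Y] by simp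
    also have "\<dots> = (Q * Y) * P'" unfolding P'Y using nassoc[OF Q Y P'(1)] by simp
    also have "\<dots> = Y * G" unfolding QY G_def using nassoc[OF Y Q P'(1)] by simp
    finally show ?thesis .
  qed
  have G'G: "G' * G = 1\<^sub>m n"
  proof -
    have "G' * G = P * (Q' * (Q * P'))" unfolding G_def G'_def using nassoc[OF P Q'(1), of "Q * P'"] Q P' by simp
    also have "\<dots> = P * P'" using nassoc[OF Q'(1) Q P'(1), symmetric] Q' P' by simp
    finally show ?thesis using P' by simp
  qed
  have GG': "G * G' = 1\<^sub>m n"
  proof -
    have "G * G' = Q * (P' * (P * Q'))" unfolding G_def G'_def using nassoc[OF Q P'(1), of "P * Q'"] P Q' by simp
    also have "\<dots> = Q * Q'" using nassoc[OF P'(1) P Q'(1), symmetric] Q' P' by simp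
    finally show ?thesis using Q' by simp
  qed
  have Xk: "X ^\<^sub>m k = G ^\<^sub>m k * Y ^\<^sub>m k"
    unfolding XYG GY[symmetric] by (rule pow_mult_comm[OF G(1) Y GY])
  have inv: "G' ^\<^sub>m k * G ^\<^sub>m k = 1\<^sub>m n"
  proof -
    have "G' ^\<^sub>m k * G ^\<^sub>m k = (G' * G) ^\<^sub>m k"
      by (rule pow_mult_comm[OF G(2) G(1), symmetric]) (simp add: G'G GG')
    also have "\<dots> = 1\<^sub>m n" unfolding G'G by (induction k) auto
    finally show ?thesis .
  qed
  show ?thesis unfolding Xk
    by (rule mat_kernel_mult_eq[of _ n n _ "G' ^\<^sub>m k"]) (use Y G inv in auto)
qed

lemma lin_h_comm:
  fixes h :: "complex mat"
  assumes h: "h \<in> carrier_mat n n"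
  shows "(c \<cdot>\<^sub>m 1\<^sub>m n - d \<cdot>\<^sub>m h) * h = h * (c \<cdot>\<^sub>m 1\<^sub>m n - d \<cdot>\<^sub>m h)"
proof -
  have I: "1\<^sub>m n \<in> carrier_mat n n" by simp
  have "(c \<cdot>\<^sub>m 1\<^sub>m n - d \<cdot>\<^sub>m h) * h = c \<cdot>\<^sub>m h - d \<cdot>\<^sub>m (h * h)"
    using h nrules(3)[of "c \<cdot>\<^sub>m 1\<^sub>m n" "d \<cdot>\<^sub>m h" h] nrules1(3,5)[OF h h] by simp
  also have "\<dots> = h * (c \<cdot>\<^sub>m 1\<^sub>m n - d \<cdot>\<^sub>m h)"
    using h nrules(4)[of h "c \<cdot>\<^sub>m 1\<^sub>m n" "d \<cdot>\<^sub>m h"] nrules1(2,4)[OF h h] by simp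
  finally show ?thesis .
qed

lemma comm_char:
  fixes h A :: "complex mat"
  assumes h: "h \<in> carrier_mat n n" and A: "A \<in> carrier_mat n n" and c: "A * h = h * A"
  shows "A * char_matrix h e = char_matrix h e * A"
proof -
  have ch: "char_matrix h e = h + (-e) \<cdot>\<^sub>m 1\<^sub>m n" unfolding char_matrix_def using h by simp
  have "A * char_matrix h e = A * h + (-e) \<cdot>\<^sub>m A"
    unfolding ch using nrules(2)[OF A h, of "(-e) \<cdot>\<^sub>m 1\<^sub>m n"] nrules1(4)[OF A h] by simp
  also have "\<dots> = char_matrix h e * A"
    unfolding ch c using nrules(1)[OF h _ A, of "(-e) \<cdot>\<^sub>m 1\<^sub>m n"] nrules1(5)[OF A h] by simp
  finally show ?thesis .
qed

lemma core_factor_M: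
  fixes h T M :: "complex mat"
  assumes h: "h \<in> carrier_mat n n" and T: "T \<in> carrier_mat n n" and M: "M \<in> carrier_mat n n"
    and E1: "T * (sig \<cdot>\<^sub>m 1\<^sub>m n - h) = h - h * h"
    and E2: "M * (1\<^sub>m n - lam \<cdot>\<^sub>m T) = a \<cdot>\<^sub>m (1\<^sub>m n + T) + b \<cdot>\<^sub>m h"
  shows "char_matrix M mu * ((1\<^sub>m n - lam \<cdot>\<^sub>m T) * (sig \<cdot>\<^sub>m 1\<^sub>m n - h)) =
     ((a - mu) * sig) \<cdot>\<^sub>m 1\<^sub>m n + (b * sig - (a - mu) + (a + mu * lam)) \<cdot>\<^sub>m h + (- (a + mu * lam) - b) \<cdot>\<^sub>m (h * h)"
proof -
  let ?Z = "1\<^sub>m n - lam \<cdot>\<^sub>m T" and ?W = "sig \<cdot>\<^sub>m 1\<^sub>m n - h"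
  have Z: "?Z \<in> carrier_mat n n" and W: "?W \<in> carrier_mat n n" using T h by auto
  have I: "1\<^sub>m n \<in> carrier_mat n n" by simp
  have cM: "char_matrix M mu = M + (-mu) \<cdot>\<^sub>m 1\<^sub>m n" unfolding char_matrix_def using M by simp
  have XZ: "char_matrix M mu * ?Z = M * ?Z + (-mu) \<cdot>\<^sub>m ?Z"
    unfolding cM using nrules(1)[OF M _ Z, of "(-mu) \<cdot>\<^sub>m 1\<^sub>m n"] nrules1(5)[OF Z I] by simp
  have XZ2: "char_matrix M mu * ?Z = (a - mu) \<cdot>\<^sub>m 1\<^sub>m n + (a + mu * lam) \<cdot>\<^sub>m T + b \<cdot>\<^sub>m h"
    unfolding XZ E2 by (rule eq_matI) (use h T in \<open>auto simp: algebra_simps\<close>)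
  have hW: "h * ?W = sig \<cdot>\<^sub>m h - h * h"
    using nrules(4)[OF h _ h, of "sig \<cdot>\<^sub>m 1\<^sub>m n"] nrules1(4)[OF h h] by simp
  have "char_matrix M mu * (?Z * ?W) = (char_matrix M mu * ?Z) * ?W"
    using nassoc[OF _ Z W, of "char_matrix M mu"] M by simp
  also have "\<dots> = ((a - mu) \<cdot>\<^sub>m 1\<^sub>m n + (a + mu * lam) \<cdot>\<^sub>m T + b \<cdot>\<^sub>m h) * ?W" unfolding XZ2 ..
  also have "\<dots> = (a - mu) \<cdot>\<^sub>m ?W + (a + mu * lam) \<cdot>\<^sub>m (T * ?W) + b \<cdot>\<^sub>m (h * ?W)"
    using nrules(1)[of "(a - mu) \<cdot>\<^sub>m 1\<^sub>m n + (a + mu * lam) \<cdot>\<^sub>m T" "b \<cdot>\<^sub>m h" ?W]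
      nrules(1)[of "(a - mu) \<cdot>\<^sub>m 1\<^sub>m n" "(a + mu * lam) \<cdot>\<^sub>m T" ?W]
      nrules1(3,5)[OF T W] nrules1(3)[OF h W] nrules1(5)[OF W I] h T W by simp
  also have "\<dots> = (a - mu) \<cdot>\<^sub>m ?W + (a + mu * lam) \<cdot>\<^sub>m (h - h * h) + b \<cdot>\<^sub>m (sig \<cdot>\<^sub>m h - h * h)"
    unfolding E1 hW ..
  also have "\<dots> = ((a - mu) * sig) \<cdot>\<^sub>m 1\<^sub>m n + (b * sig - (a - mu) + (a + mu * lam)) \<cdot>\<^sub>m h + (- (a + mu * lam) - b) \<cdot>\<^sub>m (h * h)"
    by (rule eq_matI) (use h in \<open>auto simp: algebra_simps\<close>)
  finally show ?thesis .
qed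

lemma core_factor_h:
  fixes h :: "complex mat"
  assumes h: "h \<in> carrier_mat n n"
  shows "char_matrix h e * (K \<cdot>\<^sub>m 1\<^sub>m n - L \<cdot>\<^sub>m h) = (- e * K) \<cdot>\<^sub>m 1\<^sub>m n + (K + e * L) \<cdot>\<^sub>m h + (- L) \<cdot>\<^sub>m (h * h)"
proof -
  let ?Q = "K \<cdot>\<^sub>m 1\<^sub>m n - L \<cdot>\<^sub>m h"
  have Q: "?Q \<in> carrier_mat n n" using h by auto
  have I: "1\<^sub>m n \<in> carrier_mat n n" by simp
  have cM: "char_matrix h e = h + (-e) \<cdot>\<^sub>m 1\<^sub>m n" unfolding char_matrix_def using h by simp
  have "char_matrix h e * ?Q = h * ?Q + (-e) \<cdot>\<^sub>m ?Q"
    unfolding cM using nrules(1)[OF h _ Q, of "(-e) \<cdot>\<^sub>m 1\<^sub>m n"] nrules1(5)[OF Q I] by simp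
  also have "h * ?Q = K \<cdot>\<^sub>m h - L \<cdot>\<^sub>m (h * h)"
    using nrules(4)[OF h _ _, of "K \<cdot>\<^sub>m 1\<^sub>m n" "L \<cdot>\<^sub>m h"] nrules1(2,4)[OF h h] h by simp
  also have "K \<cdot>\<^sub>m h - L \<cdot>\<^sub>m (h * h) + (-e) \<cdot>\<^sub>m ?Q = (- e * K) \<cdot>\<^sub>m 1\<^sub>m n + (K + e * L) \<cdot>\<^sub>m h + (- L) \<cdot>\<^sub>m (h * h)"
    by (rule eq_matI) (use h in \<open>auto simp: algebra_simps\<close>)
  finally show ?thesis .
qed

lemma core_kernel:
  fixes h T M :: "complex mat"
  assumes h: "h \<in> carrier_mat n n" and T: "T \<in> carrier_mat n n" and M: "M \<in> carrier_mat n n"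
    and E1: "T * (sig \<cdot>\<^sub>m 1\<^sub>m n - h) = h - h * h"
    and E2: "M * (1\<^sub>m n - lam \<cdot>\<^sub>m T) = a \<cdot>\<^sub>m (1\<^sub>m n + T) + b \<cdot>\<^sub>m h"
    and E3: "h * T = T * h"
    and s1: "(a - mu) * sig = - e * K" and s2: "b * sig - (a - mu) + (a + mu * lam) = K + e * L"
    and s3: "- (a + mu * lam) - b = - L"
    and dZ: "det (1\<^sub>m n - lam \<cdot>\<^sub>m T) \<noteq> 0" and dW: "det (sig \<cdot>\<^sub>m 1\<^sub>m n - h) \<noteq> 0"
    and dQ: "det (K \<cdot>\<^sub>m 1\<^sub>m n - L \<cdot>\<^sub>m h) \<noteq> 0"
  shows "mat_kernel ((char_matrix M mu) ^\<^sub>m k) = mat_kernel ((char_matrix h e) ^\<^sub>m k)"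
proof -
  let ?Z = "1\<^sub>m n - lam \<cdot>\<^sub>m T" and ?W = "sig \<cdot>\<^sub>m 1\<^sub>m n - h" and ?Q = "K \<cdot>\<^sub>m 1\<^sub>m n - L \<cdot>\<^sub>m h"
  let ?Y = "char_matrix h e"
  have Z: "?Z \<in> carrier_mat n n" and W: "?W \<in> carrier_mat n n" and Q: "?Q \<in> carrier_mat n n"
    and Y: "?Y \<in> carrier_mat n n" using T h by auto
  have I: "1\<^sub>m n \<in> carrier_mat n n" by simp
  have XP: "char_matrix M mu * (?Z * ?W) = ?Y * ?Q"
    unfolding core_factor_M[OF h T M E1 E2] core_factor_h[OF h] s1 s2 s3 ..
  have Zh: "?Z * h = h * ?Z"
  proof -
    have "?Z * h = h - lam \<cdot>\<^sub>m (T * h)"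
      using nrules(3)[OF I _ h, of "lam \<cdot>\<^sub>m T"] nrules1(3)[OF T h] h T by simp
    also have "\<dots> = h * ?Z"
      unfolding E3[symmetric] using nrules(4)[OF h I, of "lam \<cdot>\<^sub>m T"] nrules1(2)[OF h T] h T by simp
    finally show ?thesis .
  qed
  have h1: "1 \<cdot>\<^sub>m h = h" by (rule eq_matI) (use h in auto)
  have Wh: "?W * h = h * ?W" using lin_h_comm[OF h, of sig 1] unfolding h1 .
  have ZY: "?Z * ?Y = ?Y * ?Z" by (rule comm_char[OF h Z Zh])
  have WY: "?W * ?Y = ?Y * ?W" by (rule comm_char[OF h W Wh])
  have QY: "?Q * ?Y = ?Y * ?Q" by (rule comm_char[OF h Q lin_h_comm[OF h]])
  have PY: "(?Z * ?W) * ?Y = ?Y * (?Z * ?W)"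
  proof -
    have "(?Z * ?W) * ?Y = ?Z * (?W * ?Y)" using nassoc[OF Z W Y] .
    also have "\<dots> = (?Z * ?Y) * ?W" unfolding WY using nassoc[OF Z Y W] by simp
    also have "\<dots> = ?Y * (?Z * ?W)" unfolding ZY using nassoc[OF Y Z W] by simp
    finally show ?thesis .
  qed
  have dP: "det (?Z * ?W) \<noteq> 0" using dZ dW det_mult[OF Z W] by simp
  show ?thesis
    by (rule kernel_eq_of_factor[OF _ Y _ Q XP PY QY dP dQ]) (use M Z W in auto)
qed

end

section \<open>Triangular matrices: determinants, eigenvalues, multiplicities\<close>

definition lowtri :: "complex mat \<Rightarrow> bool" where
  "lowtri A \<longleftrightarrow> (\<forall>i j. i < j \<longrightarrow> j < dim_row A \<longrightarrow> A $$ (i,j) = 0)"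

lemma det_lowtri:
  assumes A: "A \<in> carrier_mat n n" and L: "lowtri A"
  shows "det A = (\<Prod>i = 0..<n. A $$ (i,i))"
proof -
  have "det A = prod_list (diag_mat A)"
    by (rule det_lower_triangular[OF _ A]) (use L A in \<open>auto simp: lowtri_def\<close>)
  also have "\<dots> = (\<Prod>i = 0..<n. A $$ (i,i))" using A by (simp add: prod_list_diag_prod)
  finally show ?thesis .
qed

lemma det_lowtri_nz:
  assumes A: "A \<in> carrier_mat n n" and L: "lowtri A" and d: "\<And>i. i < n \<Longrightarrow> A $$ (i,i) \<noteq> 0"
  shows "det A \<noteq> 0"
  unfolding det_lowtri[OF A L] using d by simp

lemma eigenvalue_lowtri:
  assumes A: "A \<in> carrier_mat n n" and L: "lowtri A"
  shows "eigenvalue A e \<longleftrightarrow> (\<exists>i<n. A $$ (i,i) = e)"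
proof -
  have C: "char_matrix A e \<in> carrier_mat n n" using A by simp
  have LC: "lowtri (char_matrix A e)" using L A unfolding lowtri_def char_matrix_def by auto
  have "eigenvalue A e \<longleftrightarrow> det (char_matrix A e) = 0" by (rule eigenvalue_det[OF A])
  also have "\<dots> \<longleftrightarrow> (\<Prod>i = 0..<n. char_matrix A e $$ (i,i)) = 0" unfolding det_lowtri[OF C LC] ..
  also have "\<dots> \<longleftrightarrow> (\<exists>i<n. A $$ (i,i) = e)" using A by (auto simp: char_matrix_def)
  finally show ?thesis .
qed

lemma char_poly_lowtri:
  assumes A: "A \<in> carrier_mat n n" and L: "lowtri A"
  shows "char_poly A = (\<Prod>a \<leftarrow> diag_mat A. [:- a, 1:])"
proof -
  have AT: "transpose_mat A \<in> carrier_mat n n" using A by simp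
  have UT: "upper_triangular (transpose_mat A)" using L A unfolding lowtri_def upper_triangular_def by auto
  have "char_poly A = char_poly (transpose_mat A)" using char_poly_transpose_mat[OF A] by simp
  also have "\<dots> = (\<Prod>a \<leftarrow> diag_mat (transpose_mat A). [:- a, 1:])" by (rule char_poly_upper_triangular[OF AT UT])
  also have "diag_mat (transpose_mat A) = diag_mat A" using A by simp
  finally show ?thesis .
qed

lemma order_prod_lin:
  "Polynomial.order e (\<Prod>a \<leftarrow> as. [:- a, 1:]) = length (filter (\<lambda>a. a = e) (as :: complex list))"
proof (induction as)
  case Nil
  show ?case by (simp add: order_0I)
next
  case (Cons a as)
  have nz: "(\<Prod>a \<leftarrow> as. [:- a, 1:]) \<noteq> (0 :: complex poly)"
    by (auto simp: prod_list_zero_iff)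
  have nz1: "[:- a, 1:] \<noteq> (0 :: complex poly)" by simp
  have nz2: "[:- a, 1:] * (\<Prod>a \<leftarrow> as. [:- a, 1:]) \<noteq> (0 :: complex poly)" by (rule no_zero_divisors[OF nz1 nz])
  have o1: "Polynomial.order e [:- a, 1:] = (if a = e then 1 else 0)"
  proof (cases "a = e")
    case True
    then show ?thesis using order_power_n_n[of e 1] by simp
  next
    case False
    have "poly [:- a, 1:] e \<noteq> 0" using False by simp
    from order_0I[OF this] show ?thesis using False by simp
  qed
  show ?case using order_mult[OF nz2, of e] o1 Cons by simp
qed

lemma dims_from_jordan:
  fixes A :: "complex mat"
  assumes A: "A \<in> carrier_mat n n" and L: "lowtri A"
    and cnt: "length (filter (\<lambda>a. a = e) (diag_mat A)) = m" and mn: "m \<le> k"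
  shows "dim_gen_eigenspace A e k = m"
proof -
  have cp: "char_poly A = (\<Prod>a \<leftarrow> diag_mat A. [:- a, 1:])" by (rule char_poly_lowtri[OF A L])
  obtain n_as where jnf: "jordan_nf A n_as" using jordan_nf_exists[OF A cp] by blast
  have ord: "Polynomial.order e (char_poly A) = m" unfolding cp order_prod_lin cnt ..
  have bound: "\<And>d. (d, e) \<in> set n_as \<Longrightarrow> d \<le> k"
    using jordan_nf_block_size_order_bound[OF jnf] ord mn by fastforce
  have "dim_gen_eigenspace A e k = (\<Sum> d \<leftarrow> map fst [(d, e') \<leftarrow> n_as . e' = e]. min k d)"
    by (rule dim_gen_eigenspace[OF jnf])
  also have "\<dots> = (\<Sum> d \<leftarrow> map fst [(d, e') \<leftarrow> n_as . e' = e]. d)"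
    by (rule arg_cong[where f = sum_list], rule map_cong) (use bound in auto)
  also have "[(d, e') \<leftarrow> n_as . e' = e] = filter (\<lambda>na. snd na = e) n_as"
    by (rule filter_cong) auto
  also have "(\<Sum> d \<leftarrow> map fst (filter (\<lambda>na. snd na = e) n_as). d) = Polynomial.order e (char_poly A)"
    using jordan_nf_order[OF jnf, of e] by simp
  finally show ?thesis using ord by simp
qed

lemma kernel_dim_eq:
  assumes "mat_kernel A = mat_kernel B" "dim_col A = dim_col B"
  shows "kernel_dim A = kernel_dim B"
  using assms unfolding kernel_dim_def by simp

lemma kernel_dim_one:
  fixes A :: "complex mat"
  assumes A: "A \<in> carrier_mat n n" and w: "w \<in> carrier_vec n" "w \<noteq> 0\<^sub>v n" "A *\<^sub>v w = 0\<^sub>v n"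
    and all: "\<And>x. x \<in> carrier_vec n \<Longrightarrow> A *\<^sub>v x = 0\<^sub>v n \<Longrightarrow> \<exists>c. x = c \<cdot>\<^sub>v w"
  shows "kernel_dim A = 1"
proof -
  interpret K: kernel n n A by (unfold_locales) (rule A)
  have wK: "w \<in> mat_kernel A" using w A by (auto intro: mat_kernelI)
  have sub: "{w} \<subseteq> mat_kernel A" using wK by auto
  have gen: "K.Ker.span {w} = mat_kernel A"
  proof
    show "K.Ker.span {w} \<subseteq> mat_kernel A" using K.Ker.span_is_subset2[OF sub] by simp
  next
    show "mat_kernel A \<subseteq> K.Ker.span {w}"
    proof
      fix x assume x: "x \<in> mat_kernel A"
      then obtain c where c: "x = c \<cdot>\<^sub>v w" using all mat_kernelD[OF A x] by blast
      have "w \<in> K.Ker.span {w}" using K.Ker.span_self[of w] wK by simp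
      moreover have "submodule class_ring (K.Ker.span {w}) K.VK" by (rule K.Ker.span_is_submodule[OF sub])
      ultimately show "x \<in> K.Ker.span {w}" unfolding c using submodule.smult_closed by fastforce
    qed
  qed
  have "K.Ker.dim = 1"
    by (rule K.Ker.dim1I) (use gen wK w in auto)
  thus ?thesis by simp
qed

lemma dgen1:
  assumes A: "A \<in> carrier_mat n n"
  shows "dim_gen_eigenspace A e 1 = kernel_dim (char_matrix A e)"
  unfolding dim_gen_eigenspace_def using A by simp


lemma char_row3:
  fixes A :: "complex mat"
  assumes A: "A \<in> carrier_mat n n" and x: "x \<in> carrier_vec n" and i: "i < n"
    and band: "\<And>k. k < n \<Longrightarrow> k \<noteq> i \<Longrightarrow> k + 1 \<noteq> i \<Longrightarrow> k + 2 \<noteq> i \<Longrightarrow> A $$ (i,k) = 0"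
  shows "(char_matrix A e *\<^sub>v x) $ i = (A $$ (i,i) - e) * x $ i
     + (if 1 \<le> i then A $$ (i,i-1) * x $ (i-1) else 0) + (if 2 \<le> i then A $$ (i,i-2) * x $ (i-2) else 0)"
proof -
  let ?C = "char_matrix A e"
  have C: "?C \<in> carrier_mat n n" using A by simp
  have Cij: "\<And>k. k < n \<Longrightarrow> ?C $$ (i,k) = A $$ (i,k) - (if i = k then e else 0)"
    using A i by (simp add: char_matrix_def)
  have "(?C *\<^sub>v x) $ i = (\<Sum>k\<in>{0..<n}. ?C $$ (i,k) * x $ k)" by (rule mult_vec_entry[OF C x i])
  also have "\<dots> = ?C $$ (i,i) * x $ i + (if 1 \<le> i then ?C $$ (i,i-1) * x $ (i-1) else 0)
      + (if 2 \<le> i then ?C $$ (i,i-2) * x $ (i-2) else 0)"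
    by (rule sum_row3[where f = "\<lambda>k. ?C $$ (i,k) * x $ k", OF i]) (use band Cij in auto)
  also have "\<dots> = (A $$ (i,i) - e) * x $ i
     + (if 1 \<le> i then A $$ (i,i-1) * x $ (i-1) else 0) + (if 2 \<le> i then A $$ (i,i-2) * x $ (i-2) else 0)"
    using Cij i by auto
  finally show ?thesis .
qed

lemma hL_row:
  assumes x: "x \<in> carrier_vec n" and i: "i < n"
  shows "(char_matrix (hL n s) e *\<^sub>v x) $ i = ((if odd i then 1 else 0) - e) * x $ i
     + (if 1 \<le> i then - s * x $ (i-1) else 0) + (if 2 \<le> i \<and> even i then x $ (i-2) else 0)"
  by (subst char_row3[OF hL_carrier x i]) (use i in auto)

lemma hR_row:
  assumes x: "x \<in> carrier_vec n" and i: "i < n"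
  shows "(char_matrix (hR n s) e *\<^sub>v x) $ i = ((if even i then 1 else 0) - e) * x $ i
     + (if 1 \<le> i then s * x $ (i-1) else 0) + (if 2 \<le> i \<and> odd i then x $ (i-2) else 0)"
  by (subst char_row3[OF hR_carrier x i]) (use i in auto)

definition wA :: "nat \<Rightarrow> complex \<Rightarrow> complex vec" where
  "wA n s = vec n (\<lambda>j. if j = n - 2 then 1 else if j = n - 1 then s else 0)"
definition wB :: "nat \<Rightarrow> complex vec" where
  "wB n = vec n (\<lambda>j. if j = n - 1 then 1 else 0)"

lemma wA_carrier: "wA n s \<in> carrier_vec n" by (simp add: wA_def)
lemma wB_carrier: "wB n \<in> carrier_vec n" by (simp add: wB_def)
lemma wA_nz:
  assumes "n = 2 * N" "1 \<le> N"
  shows "wA n s \<noteq> 0\<^sub>v n"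
proof
  assume "wA n s = 0\<^sub>v n"
  hence "(wA n s) $ (n-2) = (0\<^sub>v n :: complex vec) $ (n-2)" by simp
  thus False using assms by (simp add: wA_def)
qed

lemma wB_nz:
  assumes "1 \<le> n"
  shows "wB n \<noteq> 0\<^sub>v n"
proof
  assume "wB n = 0\<^sub>v n"
  hence "(wB n) $ (n-1) = (0\<^sub>v n :: complex vec) $ (n-1)" by simp
  thus False using assms by (simp add: wB_def)
qed

lemma hL_ker0:
  assumes n: "n = 2 * N" and N: "1 \<le> N" and s2: "s^2 \<noteq> 1"
    and x: "x \<in> carrier_vec n" and K: "char_matrix (hL n s) 0 *\<^sub>v x = 0\<^sub>v n"
  shows "x = x $ (n - 2) \<cdot>\<^sub>v wA n s"
proof -
  have R: "\<And>i. i < n \<Longrightarrow> ((if odd i then 1 else 0) - 0) * x $ i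
     + (if 1 \<le> i then - s * x $ (i-1) else 0) + (if 2 \<le> i \<and> even i then x $ (i-2) else 0) = 0"
  proof -
    fix i assume i: "i < n"
    have "(char_matrix (hL n s) 0 *\<^sub>v x) $ i = 0" using K i by simp
    thus "((if odd i then 1 else 0) - 0) * x $ i
     + (if 1 \<le> i then - s * x $ (i-1) else 0) + (if 2 \<le> i \<and> even i then x $ (i-2) else 0) = 0"
      unfolding hL_row[OF x i] .
  qed
  have ze: "x $ j = 0" if j: "j + 2 < n" "even j" for j
  proof -
    have a: "x $ (j+1) = s * x $ j" using R[of "j+1"] j by auto
    have b: "x $ j = s * x $ (j+1)" using R[of "j+2"] j by auto
    have "(1 - s^2) * x $ j = 0" using a b by (simp add: power2_eq_square algebra_simps)
    thus ?thesis using s2 by simp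
  qed
  have z: "x $ j = 0" if j: "j + 2 < n" for j
  proof (cases "even j")
    case True thus ?thesis using ze j by auto
  next
    case False
    have "x $ (j-1) = 0" using ze[of "j-1"] j False by (cases j) auto
    moreover have "x $ j = s * x $ (j-1)" using R[of j] j False by (cases j) auto
    ultimately show ?thesis by simp
  qed
  have o: "odd (n - 1)" using n N by presburger
  have p: "1 \<le> n - 1" "n - 1 < n" using n N by auto
  have e1: "n - 1 - 1 = n - 2" by simp
  have last: "x $ (n-1) = s * x $ (n-2)" using R[OF p(2)] o p unfolding e1 by auto
  show ?thesis
  proof (rule eq_vecI)
    fix j assume "j < dim_vec (x $ (n - 2) \<cdot>\<^sub>v wA n s)"
    hence j: "j < n" by (simp add: wA_def)
    consider "j + 2 < n" | "j = n - 2" | "j = n - 1" using j by linarith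
    thus "x $ j = (x $ (n - 2) \<cdot>\<^sub>v wA n s) $ j"
      by cases (use z last j n N in \<open>auto simp: wA_def\<close>)
  qed (use x in \<open>auto simp: wA_def\<close>)
qed

lemma hL_ker1:
  assumes n: "n = 2 * N" and N: "1 \<le> N" and s0: "s \<noteq> 0"
    and x: "x \<in> carrier_vec n" and K: "char_matrix (hL n s) 1 *\<^sub>v x = 0\<^sub>v n"
  shows "x = x $ (n - 1) \<cdot>\<^sub>v wB n"
proof -
  have R: "\<And>i. i < n \<Longrightarrow> ((if odd i then 1 else 0) - 1) * x $ i
     + (if 1 \<le> i then - s * x $ (i-1) else 0) + (if 2 \<le> i \<and> even i then x $ (i-2) else 0) = 0"
  proof -
    fix i assume i: "i < n"
    have "(char_matrix (hL n s) 1 *\<^sub>v x) $ i = 0" using K i by simp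
    thus "((if odd i then 1 else 0) - 1) * x $ i
     + (if 1 \<le> i then - s * x $ (i-1) else 0) + (if 2 \<le> i \<and> even i then x $ (i-2) else 0) = 0"
      unfolding hL_row[OF x i] .
  qed
  have ze: "x $ j = 0" if j: "j + 1 < n" "even j" for j
    using R[of "j+1"] j s0 by auto
  have zo: "x $ j = 0" if j: "j + 1 < n" "odd j" for j
  proof -
    have "x $ (j+1) = 0" using ze[of "j+1"] j n by (cases "j + 2 < n") (auto, presburger)
    moreover have "x $ (j-1) = 0" using ze[of "j-1"] j by (cases j) auto
    moreover have "- x $ (j+1) - s * x $ j + x $ (j-1) = 0" using R[of "j+1"] j by (cases j) auto
    ultimately show ?thesis using s0 by simp
  qed
  show ?thesis
  proof (rule eq_vecI)
    fix j assume "j < dim_vec (x $ (n - 1) \<cdot>\<^sub>v wB n)"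
    hence j: "j < n" by (simp add: wB_def)
    consider "j + 1 < n" | "j = n - 1" using j by linarith
    thus "x $ j = (x $ (n - 1) \<cdot>\<^sub>v wB n) $ j"
      by cases (use ze zo j in \<open>auto simp: wB_def\<close>)
  qed (use x in \<open>auto simp: wB_def\<close>)
qed

lemma hR_ker0:
  assumes n: "n = 2 * N" and N: "1 \<le> N" and s2: "s^2 \<noteq> 1"
    and x: "x \<in> carrier_vec n" and K: "char_matrix (hR n s) 0 *\<^sub>v x = 0\<^sub>v n"
  shows "x = x $ (n - 1) \<cdot>\<^sub>v wB n"
proof -
  have R: "\<And>i. i < n \<Longrightarrow> ((if even i then 1 else 0) - 0) * x $ i
     + (if 1 \<le> i then s * x $ (i-1) else 0) + (if 2 \<le> i \<and> odd i then x $ (i-2) else 0) = 0"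
  proof -
    fix i assume i: "i < n"
    have "(char_matrix (hR n s) 0 *\<^sub>v x) $ i = 0" using K i by simp
    thus "((if even i then 1 else 0) - 0) * x $ i
     + (if 1 \<le> i then s * x $ (i-1) else 0) + (if 2 \<le> i \<and> odd i then x $ (i-2) else 0) = 0"
      unfolding hR_row[OF x i] .
  qed
  have zo: "x $ j = 0" if j: "j + 2 < n" "odd j" for j
  proof -
    have a: "x $ (j+1) = - s * x $ j" using R[of "j+1"] j by (auto simp: eq_neg_iff_add_eq_0)
    have b: "s * x $ (j+1) + x $ j = 0" using R[of "j+2"] j by auto
    have "(1 - s^2) * x $ j = 0" using a b by (simp add: power2_eq_square algebra_simps)
    thus ?thesis using s2 by simp
  qed
  have z: "x $ j = 0" if j: "j + 1 < n" for j
  proof (cases "odd j")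
    case True
    have "j + 2 < n" using j True n by presburger
    thus ?thesis using zo True by auto
  next
    case False
    show ?thesis
    proof (cases j)
      case 0 thus ?thesis using R[of 0] j by auto
    next
      case (Suc j1)
      have "x $ j1 = 0" using zo[of j1] Suc False j by auto
      moreover have "x $ j + s * x $ j1 = 0" using R[of j] j False Suc by auto
      ultimately show ?thesis by simp
    qed
  qed
  show ?thesis
  proof (rule eq_vecI)
    fix j assume "j < dim_vec (x $ (n - 1) \<cdot>\<^sub>v wB n)"
    hence j: "j < n" by (simp add: wB_def)
    consider "j + 1 < n" | "j = n - 1" using j by linarith
    thus "x $ j = (x $ (n - 1) \<cdot>\<^sub>v wB n) $ j"
      by cases (use z j in \<open>auto simp: wB_def\<close>)
  qed (use x in \<open>auto simp: wB_def\<close>)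
qed

lemma hR_ker1:
  assumes n: "n = 2 * N" and N: "1 \<le> N" and s0: "s \<noteq> 0"
    and x: "x \<in> carrier_vec n" and K: "char_matrix (hR n s) 1 *\<^sub>v x = 0\<^sub>v n"
  shows "x = x $ (n - 2) \<cdot>\<^sub>v wA n s"
proof -
  have R: "\<And>i. i < n \<Longrightarrow> ((if even i then 1 else 0) - 1) * x $ i
     + (if 1 \<le> i then s * x $ (i-1) else 0) + (if 2 \<le> i \<and> odd i then x $ (i-2) else 0) = 0"
  proof -
    fix i assume i: "i < n"
    have "(char_matrix (hR n s) 1 *\<^sub>v x) $ i = 0" using K i by simp
    thus "((if even i then 1 else 0) - 1) * x $ i
     + (if 1 \<le> i then s * x $ (i-1) else 0) + (if 2 \<le> i \<and> odd i then x $ (i-2) else 0) = 0"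
      unfolding hR_row[OF x i] .
  qed
  have zo: "x $ j = 0" if j: "j + 2 < n" "odd j" for j
    using R[of "j+1"] j s0 by auto
  have ze: "x $ j = 0" if j: "j + 2 < n" "even j" for j
  proof -
    have "j + 1 + 2 < n" using j n by presburger
    hence "x $ (j+1) = 0" using zo[of "j+1"] j by auto
    moreover have "j \<ge> 1 \<Longrightarrow> x $ (j-1) = 0" using zo[of "j-1"] j by (cases j) auto
    moreover have "- x $ (j+1) + s * x $ j + (if 1 \<le> j then x $ (j-1) else 0) = 0"
      using R[of "j+1"] j by (cases j) auto
    ultimately have "s * x $ j = 0" by (cases "1 \<le> j") auto
    thus ?thesis using s0 by simp
  qed
  have z: "x $ j = 0" if "j + 2 < n" for j using ze zo that by blast
  have last: "x $ (n-1) = s * x $ (n-2)"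
  proof -
    have o: "odd (n - 1)" using n N by presburger
    have p: "n - 1 < n" "1 \<le> n - 1" using n N by auto
    have e1: "n - 1 - 1 = n - 2" "n - 1 - 2 = n - 3" by auto
    have "- x $ (n-1) + s * x $ (n-2) + (if 2 \<le> n - 1 then x $ (n-3) else 0) = 0"
      using R[OF p(1)] o p unfolding e1 by auto
    moreover have "2 \<le> n - 1 \<Longrightarrow> x $ (n-3) = 0" using z[of "n-3"] by auto
    ultimately show ?thesis by (cases "2 \<le> n - 1") auto
  qed
  show ?thesis
  proof (rule eq_vecI)
    fix j assume "j < dim_vec (x $ (n - 2) \<cdot>\<^sub>v wA n s)"
    hence j: "j < n" by (simp add: wA_def)
    consider "j + 2 < n" | "j = n - 2" | "j = n - 1" using j by linarith
    thus "x $ j = (x $ (n - 2) \<cdot>\<^sub>v wA n s) $ j"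
      by cases (use z last j n N in \<open>auto simp: wA_def\<close>)
  qed (use x in \<open>auto simp: wA_def\<close>)
qed


lemma char_dims[simp]: "dim_row (char_matrix A e) = dim_row A" "dim_col (char_matrix A e) = dim_row A"
  by (simp_all add: char_matrix_def)

definition good :: "nat \<Rightarrow> complex mat \<Rightarrow> complex mat \<Rightarrow> bool" where
  "good N h M \<longleftrightarrow> h \<in> carrier_mat (2*N) (2*N) \<and> M \<in> carrier_mat (2*N) (2*N) \<and>
     card {e. eigenvalue h e} = 2 \<and> card {e. eigenvalue M e} = 2 \<and>
     (\<forall>e. eigenvalue h e \<longrightarrow> (\<exists>\<mu>. eigenvalue M \<mu> \<and>
        (\<forall>k. mat_kernel ((char_matrix M \<mu>) ^\<^sub>m k) = mat_kernel ((char_matrix h e) ^\<^sub>m k)) \<and>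
        dim_gen_eigenspace h e 1 = 1 \<and> dim_gen_eigenspace h e (2*N) = N))"

lemma sum_min1: "(\<forall>x\<in>set xs. 0 < x) \<Longrightarrow> sum_list (map (min (1::nat)) xs) = length xs"
  by (induction xs) auto

lemma jordan_single:
  fixes A :: "complex mat"
  assumes jnf: "jordan_nf A n_as" and d1: "dim_gen_eigenspace A e 1 = 1"
    and dN: "dim_gen_eigenspace A e (2*N) = N" and N: "1 \<le> N"
  shows "[p \<leftarrow> n_as. snd p = e] = [(N, e)]"
proof -
  let ?F = "[p \<leftarrow> n_as. snd p = e]"
  have F: "[(d, e') \<leftarrow> n_as . e' = e] = ?F" by (rule filter_cong) auto
  have pos: "\<forall>x\<in>set (map fst ?F). 0 < x"
    using jnf unfolding jordan_nf_def by (auto intro!: Nat.gr0I) (metis fst_conv image_eqI)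
  have "1 = sum_list (map (min 1) (map fst ?F))"
    using dim_gen_eigenspace[OF jnf, of e 1] d1 F by simp
  also have "\<dots> = length ?F" using sum_min1[OF pos] by simp
  finally have len: "length ?F = 1" by simp
  then obtain p where Fp: "?F = [p]" by (metis One_nat_def length_0_conv length_Suc_conv)
  have "p \<in> set ?F" using Fp by simp
  hence sp: "snd p = e" by simp
  have "N = min (2*N) (fst p)"
    using dim_gen_eigenspace[OF jnf, of e "2*N"] dN F Fp by simp
  hence "fst p = N" using N by (auto simp: min_def split: if_splits)
  thus ?thesis unfolding Fp using sp by (cases p) auto
qed

lemma good_root_match:
  assumes N: "1 \<le> N" and g: "good N h M"
  shows "root_match N h M"
proof -
  have h: "h \<in> carrier_mat (2*N) (2*N)" and M: "M \<in> carrier_mat (2*N) (2*N)" using g unfolding good_def by auto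
  show ?thesis unfolding root_match_def
  proof (intro conjI allI impI)
    show "card {e. eigenvalue h e} = 2" "card {e. eigenvalue M e} = 2" using g unfolding good_def by auto
  next
    fix e assume e: "eigenvalue h e"
    then obtain \<mu> where \<mu>: "eigenvalue M \<mu>"
      and K: "\<And>k. mat_kernel ((char_matrix M \<mu>) ^\<^sub>m k) = mat_kernel ((char_matrix h e) ^\<^sub>m k)"
      and d1: "dim_gen_eigenspace h e 1 = 1" and dN: "dim_gen_eigenspace h e (2*N) = N"
      using g unfolding good_def by blast
    have dM: "dim_gen_eigenspace M \<mu> k = dim_gen_eigenspace h e k" for k
      unfolding dim_gen_eigenspace_def by (rule kernel_dim_eq[OF K]) (use h M in simp)
    show "\<exists>\<mu>. eigenvalue M \<mu> \<and> root_subspace h e = root_subspace M \<mu> \<and>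
             dim_gen_eigenspace h e (2*N) = N \<and> dim_gen_eigenspace M \<mu> (2*N) = N \<and>
             (\<forall>n_as. jordan_nf h n_as \<longrightarrow> [p \<leftarrow> n_as. snd p = e] = [(N, e)]) \<and>
             (\<forall>n_as. jordan_nf M n_as \<longrightarrow> [p \<leftarrow> n_as. snd p = \<mu>] = [(N, \<mu>)])"
    proof (intro exI conjI allI impI)
      show "eigenvalue M \<mu>" by fact
      show "root_subspace h e = root_subspace M \<mu>" unfolding root_subspace_def using K h M by simp
      show "dim_gen_eigenspace h e (2*N) = N" by fact
      show "dim_gen_eigenspace M \<mu> (2*N) = N" using dM dN by simp
      fix n_as
      show "jordan_nf h n_as \<Longrightarrow> [p \<leftarrow> n_as. snd p = e] = [(N, e)]"
        using jordan_single[OF _ d1 dN N] by blast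
      show "jordan_nf M n_as \<Longrightarrow> [p \<leftarrow> n_as. snd p = \<mu>] = [(N, \<mu>)]"
        using jordan_single[OF _ _ _ N, of M n_as \<mu>] dM d1 dN by simp
    qed
  qed
qed

lemma good_intro:
  assumes h: "h \<in> carrier_mat (2*N) (2*N)" and M: "M \<in> carrier_mat (2*N) (2*N)"
    and eh: "{e. eigenvalue h e} = {e0, e1}" and e01: "e0 \<noteq> e1"
    and eM: "{e. eigenvalue M e} = {m0, m1}" and m01: "m0 \<noteq> m1"
    and K0: "\<And>k. mat_kernel ((char_matrix M m0) ^\<^sub>m k) = mat_kernel ((char_matrix h e0) ^\<^sub>m k)"
    and K1: "\<And>k. mat_kernel ((char_matrix M m1) ^\<^sub>m k) = mat_kernel ((char_matrix h e1) ^\<^sub>m k)"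
    and d0: "dim_gen_eigenspace h e0 1 = 1" "dim_gen_eigenspace h e0 (2*N) = N"
    and d1: "dim_gen_eigenspace h e1 1 = 1" "dim_gen_eigenspace h e1 (2*N) = N"
  shows "good N h M"
proof -
  have m: "eigenvalue M m0" "eigenvalue M m1" using eM by (metis insertI1 insert_commute mem_Collect_eq)+
  show ?thesis unfolding good_def
  proof (intro conjI allI impI)
    fix e assume "eigenvalue h e"
    hence "e = e0 \<or> e = e1" using eh by auto
    thus "\<exists>\<mu>. eigenvalue M \<mu> \<and>
        (\<forall>k. mat_kernel ((char_matrix M \<mu>) ^\<^sub>m k) = mat_kernel ((char_matrix h e) ^\<^sub>m k)) \<and>
        dim_gen_eigenspace h e 1 = 1 \<and> dim_gen_eigenspace h e (2*N) = N"
      using m K0 K1 d0 d1 by blast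
  qed (use h M eh e01 eM m01 in auto)
qed

lemma lowtri_hL: "lowtri (hL n s)" by (auto simp: lowtri_def)
lemma lowtri_hR: "lowtri (hR n s)" by (auto simp: lowtri_def)
lemma lowtri_MG: "lowtri (MG n al be A D C lam)" by (auto simp: lowtri_def)
lemma lowtri_lin: "h \<in> carrier_mat n n \<Longrightarrow> lowtri h \<Longrightarrow> lowtri (c \<cdot>\<^sub>m 1\<^sub>m n - d \<cdot>\<^sub>m h)"
  by (auto simp: lowtri_def)
lemma det_Z: "det (1\<^sub>m n - lam \<cdot>\<^sub>m Tlo n) \<noteq> 0"
  by (rule det_lowtri_nz[of _ n]) (auto simp: lowtri_def)

lemma det_lin:
  assumes h: "h \<in> carrier_mat n n" and L: "lowtri h"
    and d: "\<And>i. i < n \<Longrightarrow> c - d * h $$ (i,i) \<noteq> 0"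
  shows "det (c \<cdot>\<^sub>m 1\<^sub>m n - d \<cdot>\<^sub>m h) \<noteq> 0"
  by (rule det_lowtri_nz[OF _ lowtri_lin[OF h L]]) (use h d in auto)

lemma eig_hL: assumes "n = 2*N" "1 \<le> N" shows "{e. eigenvalue (hL n s) e} = {0, 1}"
proof -
  have "eigenvalue (hL n s) e \<longleftrightarrow> (\<exists>i<n. hL n s $$ (i,i) = e)" for e
    by (rule eigenvalue_lowtri[OF hL_carrier lowtri_hL])
  moreover have "(\<exists>i<n. hL n s $$ (i,i) = e) \<longleftrightarrow> e = 0 \<or> e = 1" for e
  proof
    assume "\<exists>i<n. hL n s $$ (i,i) = e" thus "e = 0 \<or> e = 1" by (auto split: if_splits)
  next
    assume "e = 0 \<or> e = 1"
    thus "\<exists>i<n. hL n s $$ (i,i) = e"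
    proof
      assume "e = 0" thus ?thesis using assms by (intro exI[of _ 0]) auto
    next
      assume "e = 1" thus ?thesis using assms by (intro exI[of _ 1]) auto
    qed
  qed
  ultimately show ?thesis by auto
qed

lemma eig_hR: assumes "n = 2*N" "1 \<le> N" shows "{e. eigenvalue (hR n s) e} = {0, 1}"
proof -
  have "eigenvalue (hR n s) e \<longleftrightarrow> (\<exists>i<n. hR n s $$ (i,i) = e)" for e
    by (rule eigenvalue_lowtri[OF hR_carrier lowtri_hR])
  moreover have "(\<exists>i<n. hR n s $$ (i,i) = e) \<longleftrightarrow> e = 0 \<or> e = 1" for e
  proof
    assume "\<exists>i<n. hR n s $$ (i,i) = e" thus "e = 0 \<or> e = 1" by (auto split: if_splits)
  next
    assume "e = 0 \<or> e = 1"
    thus "\<exists>i<n. hR n s $$ (i,i) = e"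
    proof
      assume "e = 0" thus ?thesis using assms by (intro exI[of _ 1]) auto
    next
      assume "e = 1" thus ?thesis using assms by (intro exI[of _ 0]) auto
    qed
  qed
  ultimately show ?thesis by auto
qed

lemma eig_MG: assumes "n = 2*N" "1 \<le> N" shows "{e. eigenvalue (MG n al be A D C lam) e} = {al, be}"
proof -
  have "eigenvalue (MG n al be A D C lam) e \<longleftrightarrow> (\<exists>i<n. MG n al be A D C lam $$ (i,i) = e)" for e
    by (rule eigenvalue_lowtri[OF MG_carrier lowtri_MG])
  moreover have "(\<exists>i<n. MG n al be A D C lam $$ (i,i) = e) \<longleftrightarrow> e = al \<or> e = be" for e
  proof
    assume "\<exists>i<n. MG n al be A D C lam $$ (i,i) = e" thus "e = al \<or> e = be" by (auto split: if_splits)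
  next
    assume "e = al \<or> e = be"
    thus "\<exists>i<n. MG n al be A D C lam $$ (i,i) = e"
    proof
      assume "e = al" thus ?thesis using assms by (intro exI[of _ 0]) auto
    next
      assume "e = be" thus ?thesis using assms by (intro exI[of _ 1]) auto
    qed
  qed
  ultimately show ?thesis by auto
qed

lemma cnt_odd: "length (filter (\<lambda>a. a = (1::complex)) (map (\<lambda>i. if odd i then 1 else 0) [0..<2*N])) = N"
  "length (filter (\<lambda>a. a = (0::complex)) (map (\<lambda>i. if odd i then 1 else 0) [0..<2*N])) = N"
  "length (filter (\<lambda>a. a = (1::complex)) (map (\<lambda>i. if even i then 1 else 0) [0..<2*N])) = N"
  "length (filter (\<lambda>a. a = (0::complex)) (map (\<lambda>i. if even i then 1 else 0) [0..<2*N])) = N"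
  by (induction N) auto

lemma diag_hL: "diag_mat (hL n s) = map (\<lambda>i. if odd i then 1 else 0) [0..<n]"
  by (auto simp: diag_mat_def)
lemma diag_hR: "diag_mat (hR n s) = map (\<lambda>i. if even i then 1 else 0) [0..<n]"
  by (auto simp: diag_mat_def)

lemma hL_dims:
  assumes n: "n = 2*N" and N: "1 \<le> N" and s0: "s \<noteq> 0" and s2: "s^2 \<noteq> 1"
  shows "dim_gen_eigenspace (hL n s) 0 1 = 1" "dim_gen_eigenspace (hL n s) 0 (2*N) = N"
    "dim_gen_eigenspace (hL n s) 1 1 = 1" "dim_gen_eigenspace (hL n s) 1 (2*N) = N"
proof -
  show "dim_gen_eigenspace (hL n s) 0 (2*N) = N"
    by (rule dims_from_jordan[OF hL_carrier lowtri_hL]) (use n cnt_odd in \<open>auto simp: diag_hL\<close>)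
  show "dim_gen_eigenspace (hL n s) 1 (2*N) = N"
    by (rule dims_from_jordan[OF hL_carrier lowtri_hL]) (use n cnt_odd in \<open>auto simp: diag_hL\<close>)
  have w0: "char_matrix (hL n s) 0 *\<^sub>v wA n s = 0\<^sub>v n"
  proof (rule eq_vecI)
    fix i assume "i < dim_vec (0\<^sub>v n :: complex vec)"
    hence i: "i < n" by simp
    consider "i + 2 < n" | "i = n - 2" | "i = n - 1" using i by linarith
    thus "(char_matrix (hL n s) 0 *\<^sub>v wA n s) $ i = (0\<^sub>v n :: complex vec) $ i"
    proof cases
      case 1 thus ?thesis unfolding hL_row[OF wA_carrier i] using i by (auto simp: wA_def)
    next
      case 2
      have "even i" using 2 n N by presburger
      thus ?thesis unfolding hL_row[OF wA_carrier i] using i 2 n N by (auto simp: wA_def)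
    next
      case 3
      have "odd i" using 3 n N by presburger
      thus ?thesis unfolding hL_row[OF wA_carrier i] using i 3 n N by (auto simp: wA_def)
    qed
  qed simp
  have w1: "char_matrix (hL n s) 1 *\<^sub>v wB n = 0\<^sub>v n"
  proof (rule eq_vecI)
    fix i assume "i < dim_vec (0\<^sub>v n :: complex vec)"
    hence i: "i < n" by simp
    consider "i + 1 < n" | "i = n - 1" using i by linarith
    thus "(char_matrix (hL n s) 1 *\<^sub>v wB n) $ i = (0\<^sub>v n :: complex vec) $ i"
    proof cases
      case 1 thus ?thesis unfolding hL_row[OF wB_carrier i] using i by (auto simp: wB_def)
    next
      case 2
      have "odd i" using 2 n N by presburger
      thus ?thesis unfolding hL_row[OF wB_carrier i] using i 2 n N by (auto simp: wB_def)
    qed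
  qed simp
  show "dim_gen_eigenspace (hL n s) 0 1 = 1" unfolding dgen1[OF hL_carrier]
    by (rule kernel_dim_one[OF _ wA_carrier wA_nz[OF n N] w0]) (use hL_ker0[OF n N s2] in auto)
  show "dim_gen_eigenspace (hL n s) 1 1 = 1" unfolding dgen1[OF hL_carrier]
    by (rule kernel_dim_one[OF _ wB_carrier wB_nz w1]) (use hL_ker1[OF n N s0] n N in auto)
qed

lemma hR_dims:
  assumes n: "n = 2*N" and N: "1 \<le> N" and s0: "s \<noteq> 0" and s2: "s^2 \<noteq> 1"
  shows "dim_gen_eigenspace (hR n s) 0 1 = 1" "dim_gen_eigenspace (hR n s) 0 (2*N) = N"
    "dim_gen_eigenspace (hR n s) 1 1 = 1" "dim_gen_eigenspace (hR n s) 1 (2*N) = N"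
proof -
  show "dim_gen_eigenspace (hR n s) 0 (2*N) = N"
    by (rule dims_from_jordan[OF hR_carrier lowtri_hR]) (use n cnt_odd in \<open>auto simp: diag_hR\<close>)
  show "dim_gen_eigenspace (hR n s) 1 (2*N) = N"
    by (rule dims_from_jordan[OF hR_carrier lowtri_hR]) (use n cnt_odd in \<open>auto simp: diag_hR\<close>)
  have w1: "char_matrix (hR n s) 1 *\<^sub>v wA n s = 0\<^sub>v n"
  proof (rule eq_vecI)
    fix i assume "i < dim_vec (0\<^sub>v n :: complex vec)"
    hence i: "i < n" by simp
    consider "i + 2 < n" | "i = n - 2" | "i = n - 1" using i by linarith
    thus "(char_matrix (hR n s) 1 *\<^sub>v wA n s) $ i = (0\<^sub>v n :: complex vec) $ i"
    proof cases
      case 1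
      thus ?thesis unfolding hR_row[OF wA_carrier i] using i 1 by (auto simp: wA_def)
    next
      case 2
      have "even i" using 2 n N by presburger
      thus ?thesis unfolding hR_row[OF wA_carrier i] using i 2 n N by (auto simp: wA_def)
    next
      case 3
      have "odd i" using 3 n N by presburger
      moreover have "1 \<le> i" "i - 1 = n - 2" using 3 n N by auto
      ultimately show ?thesis unfolding hR_row[OF wA_carrier i] using i 3 n N by (auto simp: wA_def)
    qed
  qed simp
  have w0: "char_matrix (hR n s) 0 *\<^sub>v wB n = 0\<^sub>v n"
  proof (rule eq_vecI)
    fix i assume "i < dim_vec (0\<^sub>v n :: complex vec)"
    hence i: "i < n" by simp
    consider "i + 1 < n" | "i = n - 1" using i by linarith
    thus "(char_matrix (hR n s) 0 *\<^sub>v wB n) $ i = (0\<^sub>v n :: complex vec) $ i"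
    proof cases
      case 1 thus ?thesis unfolding hR_row[OF wB_carrier i] using i by (auto simp: wB_def)
    next
      case 2
      have "odd i" using 2 n N by presburger
      thus ?thesis unfolding hR_row[OF wB_carrier i] using i 2 n N by (auto simp: wB_def)
    qed
  qed simp
  show "dim_gen_eigenspace (hR n s) 0 1 = 1" unfolding dgen1[OF hR_carrier]
    by (rule kernel_dim_one[OF _ wB_carrier wB_nz w0]) (use hR_ker0[OF n N s2] n N in auto)
  show "dim_gen_eigenspace (hR n s) 1 1 = 1" unfolding dgen1[OF hR_carrier]
    by (rule kernel_dim_one[OF _ wA_carrier wA_nz[OF n N] w1]) (use hR_ker1[OF n N s0] in auto)
qed


lemma det_lin1:
  assumes h: "h \<in> carrier_mat n n" and L: "lowtri h"
    and d: "\<And>i. i < n \<Longrightarrow> c - h $$ (i,i) \<noteq> 0"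
  shows "det (c \<cdot>\<^sub>m 1\<^sub>m n - h) \<noteq> 0"
  by (rule det_lowtri_nz[of _ n]) (use h d L in \<open>auto simp: lowtri_def\<close>)

lemma good_hL:
  assumes n: "n = 2*N" and N: "1 \<le> N" and s0: "s \<noteq> 0" and s2: "s^2 \<noteq> 1"
    and C: "C = - (be - al) * s" and A: "A - lam * al = be" and D: "D - lam * be = al"
    and ab: "be \<noteq> al" and QA: "al * (1 + lam) + (be - al) * (1 - s^2) \<noteq> 0"
    and QB: "(be - al) * (1 - s^2) - be * (1 + lam) \<noteq> 0"
  shows "good N (hL n s) (MG n al be A D C lam)"
proof -
  have sig: "1 - s^2 \<noteq> 0" using s2 by simp
  have ss: "s^2 \<noteq> 0" using s0 by simp
  note E1 = hL_E1[of n s] and E3 = hL_E3[of n s] and E2 = MG_E2L[OF C A D, of n]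
  have dW: "det ((1 - s^2) \<cdot>\<^sub>m 1\<^sub>m n - hL n s) \<noteq> 0"
    by (rule det_lin1[OF hL_carrier lowtri_hL]) (use sig s0 in auto)
  define K0 where "K0 = al * (1 + lam) + (be - al) * (1 - s^2)"
  define L0 where "L0 = al * (1 + lam) + (be - al)"
  define K1 where "K1 = (be - al) * (1 - s^2)"
  define L1 where "L1 = be * (1 + lam)"
  have dQ0: "det (K0 \<cdot>\<^sub>m 1\<^sub>m n - L0 \<cdot>\<^sub>m hL n s) \<noteq> 0"
  proof (rule det_lin[OF hL_carrier lowtri_hL])
    fix i assume i: "i < n"
    have "K0 - L0 = - ((be - al) * s^2)" unfolding K0_def L0_def by (simp add: algebra_simps)
    moreover have "(be - al) * s^2 \<noteq> 0" using ab ss by simp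
    ultimately show "K0 - L0 * hL n s $$ (i,i) \<noteq> 0" using i QA unfolding K0_def by auto
  qed
  have dQ1: "det (K1 \<cdot>\<^sub>m 1\<^sub>m n - L1 \<cdot>\<^sub>m hL n s) \<noteq> 0"
  proof (rule det_lin[OF hL_carrier lowtri_hL])
    fix i assume i: "i < n"
    have "K1 \<noteq> 0" unfolding K1_def using ab sig by simp
    thus "K1 - L1 * hL n s $$ (i,i) \<noteq> 0" using i QB unfolding K1_def L1_def by auto
  qed
  have s01: "(al - al) * (1 - s^2) = - 0 * K0" by simp
  have s02: "(be - al) * (1 - s^2) - (al - al) + (al + al * lam) = K0 + 0 * L0"
    unfolding K0_def by (simp add: algebra_simps)
  have s03: "- (al + al * lam) - (be - al) = - L0" unfolding L0_def by (simp add: algebra_simps)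
  have s11: "(al - be) * (1 - s^2) = - 1 * K1" unfolding K1_def by (simp add: algebra_simps)
  have s12: "(be - al) * (1 - s^2) - (al - be) + (al + be * lam) = K1 + 1 * L1"
    unfolding K1_def L1_def by (simp add: algebra_simps)
  have s13: "- (al + be * lam) - (be - al) = - L1" unfolding L1_def by (simp add: algebra_simps)
  have Ker0: "mat_kernel ((char_matrix (MG n al be A D C lam) al) ^\<^sub>m k) = mat_kernel ((char_matrix (hL n s) 0) ^\<^sub>m k)" for k
    by (rule core_kernel[OF hL_carrier Tlo_carrier MG_carrier E1 E2 E3 s01 s02 s03 det_Z dW dQ0])
  have Ker1: "mat_kernel ((char_matrix (MG n al be A D C lam) be) ^\<^sub>m k) = mat_kernel ((char_matrix (hL n s) 1) ^\<^sub>m k)" for k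
    by (rule core_kernel[OF hL_carrier Tlo_carrier MG_carrier E1 E2 E3 s11 s12 s13 det_Z dW dQ1])
  show ?thesis
    by (rule good_intro[OF _ _ eig_hL[OF n N] _ eig_MG[OF n N] _ Ker0 Ker1 hL_dims[OF n N s0 s2]])
      (use n ab in auto)
qed

lemma good_hR:
  assumes n: "n = 2*N" and N: "1 \<le> N" and s0: "s \<noteq> 0" and s2: "s^2 \<noteq> 1"
    and C: "C = (al - be) * s" and A: "A - lam * al = be" and D: "D - lam * be = al"
    and ab: "be \<noteq> al" and QA: "al * (1 + lam) + (be - al) * (1 - s^2) \<noteq> 0"
    and QB: "(be - al) * (1 - s^2) - be * (1 + lam) \<noteq> 0"
  shows "good N (hR n s) (MG n al be A D C lam)"
proof -
  have sig: "1 - s^2 \<noteq> 0" using s2 by simp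
  have ss: "s^2 \<noteq> 0" using s0 by simp
  note E1 = hR_E1[of n s] and E3 = hR_E3[of n s] and E2 = MG_E2R[OF C A D, of n]
  have dW: "det ((1 - s^2) \<cdot>\<^sub>m 1\<^sub>m n - hR n s) \<noteq> 0"
    by (rule det_lin1[OF hR_carrier lowtri_hR]) (use sig s0 in auto)
  define K0 where "K0 = be * (1 + lam) + (al - be) * (1 - s^2)"
  define L0 where "L0 = be * (1 + lam) + (al - be)"
  define K1 where "K1 = (al - be) * (1 - s^2)"
  define L1 where "L1 = al * (1 + lam)"
  have dQ0: "det (K0 \<cdot>\<^sub>m 1\<^sub>m n - L0 \<cdot>\<^sub>m hR n s) \<noteq> 0"
  proof (rule det_lin[OF hR_carrier lowtri_hR])
    fix i assume i: "i < n"
    have k1: "K0 - L0 \<noteq> 0"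
    proof -
      have "K0 - L0 = - ((al - be) * s^2)" unfolding K0_def L0_def by (simp add: algebra_simps)
      moreover have "(al - be) * s^2 \<noteq> 0" using ab ss by simp
      ultimately show ?thesis by simp
    qed
    have k0: "K0 \<noteq> 0"
    proof -
      have e: "K0 = - ((be - al) * (1 - s^2) - be * (1 + lam))" unfolding K0_def by (simp add: algebra_simps)
      show ?thesis unfolding e neg_equal_0_iff_equal by (rule QB)
    qed
    show "K0 - L0 * hR n s $$ (i,i) \<noteq> 0" using i k0 k1 by (cases "even i") auto
  qed
  have dQ1: "det (K1 \<cdot>\<^sub>m 1\<^sub>m n - L1 \<cdot>\<^sub>m hR n s) \<noteq> 0"
  proof (rule det_lin[OF hR_carrier lowtri_hR])
    fix i assume i: "i < n"
    have k0: "K1 \<noteq> 0" unfolding K1_def using ab sig by simp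
    have k1: "K1 - L1 \<noteq> 0"
    proof -
      have e: "K1 - L1 = - (al * (1 + lam) + (be - al) * (1 - s^2))" unfolding K1_def L1_def
        by (simp add: algebra_simps)
      show ?thesis unfolding e neg_equal_0_iff_equal by (rule QA)
    qed
    show "K1 - L1 * hR n s $$ (i,i) \<noteq> 0" using i k0 k1 by (cases "even i") auto
  qed
  have s01: "(be - be) * (1 - s^2) = - 0 * K0" by simp
  have s02: "(al - be) * (1 - s^2) - (be - be) + (be + be * lam) = K0 + 0 * L0"
    unfolding K0_def by (simp add: algebra_simps)
  have s03: "- (be + be * lam) - (al - be) = - L0" unfolding L0_def by (simp add: algebra_simps)
  have s11: "(be - al) * (1 - s^2) = - 1 * K1" unfolding K1_def by (simp add: algebra_simps)
  have s12: "(al - be) * (1 - s^2) - (be - al) + (be + al * lam) = K1 + 1 * L1"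
    unfolding K1_def L1_def by (simp add: algebra_simps)
  have s13: "- (be + al * lam) - (al - be) = - L1" unfolding L1_def by (simp add: algebra_simps)
  have Ker0: "mat_kernel ((char_matrix (MG n al be A D C lam) be) ^\<^sub>m k) = mat_kernel ((char_matrix (hR n s) 0) ^\<^sub>m k)" for k
    by (rule core_kernel[OF hR_carrier Tlo_carrier MG_carrier E1 E2 E3 s01 s02 s03 det_Z dW dQ0])
  have Ker1: "mat_kernel ((char_matrix (MG n al be A D C lam) al) ^\<^sub>m k) = mat_kernel ((char_matrix (hR n s) 1) ^\<^sub>m k)" for k
    by (rule core_kernel[OF hR_carrier Tlo_carrier MG_carrier E1 E2 E3 s11 s12 s13 det_Z dW dQ1])
  have eM: "{e. eigenvalue (MG n al be A D C lam) e} = {be, al}" using eig_MG[OF n N] by auto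
  show ?thesis
    by (rule good_intro[OF _ _ eig_hR[OF n N] _ eM _ Ker0 Ker1 hR_dims[OF n N s0 s2]])
      (use n ab in auto)
qed

section \<open>Reversal similarity transfer\<close>

definition Jr :: "nat \<Rightarrow> complex mat" where
  "Jr n = mat n n (\<lambda>(i,j). if i + j + 1 = n then 1 else 0)"

lemma Jr_carrier[simp]: "Jr n \<in> carrier_mat n n" by (simp add: Jr_def)
lemma Jr_dim[simp]: "dim_row (Jr n) = n" "dim_col (Jr n) = n" by (simp_all add: Jr_def)
lemma Jr_idx[simp]: "i < n \<Longrightarrow> j < n \<Longrightarrow> Jr n $$ (i,j) = (if i + j + 1 = n then 1 else 0)"
  by (simp add: Jr_def)

lemma sum_single:
  fixes f :: "nat \<Rightarrow> 'a::comm_monoid_add"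
  assumes "m < n" and "\<And>k. k < n \<Longrightarrow> k \<noteq> m \<Longrightarrow> f k = 0"
  shows "(\<Sum>k\<in>{0..<n}. f k) = f m"
proof -
  have "(\<Sum>k\<in>{0..<n}. f k) = (\<Sum>k\<in>{m}. f k)"
    by (rule sum.mono_neutral_right) (use assms in auto)
  thus ?thesis by simp
qed

lemma Jr_mult:
  assumes A: "A \<in> carrier_mat n n" and i: "i < n" and j: "j < n"
  shows "(Jr n * A) $$ (i,j) = A $$ (n - 1 - i, j)"
proof -
  have "(Jr n * A) $$ (i,j) = (\<Sum>k\<in>{0..<n}. Jr n $$ (i,k) * A $$ (k,j))" by (rule mult_entry) (use A i j in auto)
  also have "\<dots> = Jr n $$ (i, n - 1 - i) * A $$ (n - 1 - i, j)"
    by (rule sum_single) (use i in auto)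
  finally show ?thesis using i by simp
qed

lemma mult_Jr:
  assumes A: "A \<in> carrier_mat n n" and i: "i < n" and j: "j < n"
  shows "(A * Jr n) $$ (i,j) = A $$ (i, n - 1 - j)"
proof -
  have "(A * Jr n) $$ (i,j) = (\<Sum>k\<in>{0..<n}. A $$ (i,k) * Jr n $$ (k,j))" by (rule mult_entry) (use A i j in auto)
  also have "\<dots> = A $$ (i, n - 1 - j) * Jr n $$ (n - 1 - j, j)"
    by (rule sum_single) (use j in auto)
  finally show ?thesis using j by simp
qed

lemma JYJ_carrier: "Y \<in> carrier_mat n n \<Longrightarrow> Jr n * Y * Jr n \<in> carrier_mat n n"
  by (metis Jr_carrier mult_carrier_mat)

lemma JAJ:
  assumes A: "A \<in> carrier_mat n n" and i: "i < n" and j: "j < n"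
  shows "(Jr n * A * Jr n) $$ (i,j) = A $$ (n - 1 - i, n - 1 - j)"
proof -
  have JA: "Jr n * A \<in> carrier_mat n n" using mult_carrier_mat[OF Jr_carrier A] .
  have "(Jr n * A * Jr n) $$ (i,j) = (Jr n * A) $$ (i, n - 1 - j)" by (rule mult_Jr[OF JA i j])
  also have "\<dots> = A $$ (n - 1 - i, n - 1 - j)" by (rule Jr_mult[OF A i]) (use j in auto)
  finally show ?thesis .
qed

lemma JJ: "Jr n * Jr n = 1\<^sub>m n"
proof (rule eq_matI)
  fix i j assume "i < dim_row (1\<^sub>m n :: complex mat)" "j < dim_col (1\<^sub>m n :: complex mat)"
  hence i: "i < n" and j: "j < n" by auto
  show "(Jr n * Jr n) $$ (i,j) = 1\<^sub>m n $$ (i,j)" using Jr_mult[OF Jr_carrier i j] i j by auto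
qed auto

lemma JJv: "v \<in> carrier_vec n \<Longrightarrow> Jr n *\<^sub>v (Jr n *\<^sub>v v) = v"
  using assoc_mult_mat_vec[of "Jr n" n n "Jr n" n v, symmetric] by (simp add: JJ)

lemma J0: "Jr n *\<^sub>v 0\<^sub>v n = 0\<^sub>v n"
  by (rule eq_vecI) (auto simp: scalar_prod_def)

lemma mat_kernel_J:
  assumes Y: "Y \<in> carrier_mat n n"
  shows "mat_kernel (Jr n * Y * Jr n) = {v \<in> carrier_vec n. Jr n *\<^sub>v v \<in> mat_kernel Y}"
proof -
  have JYJ: "Jr n * Y * Jr n \<in> carrier_mat n n" using JYJ_carrier[OF Y] .
  have JY: "Jr n * Y \<in> carrier_mat n n" using mult_carrier_mat[OF Jr_carrier Y] .
  have eq: "(Jr n * Y * Jr n) *\<^sub>v v = Jr n *\<^sub>v (Y *\<^sub>v (Jr n *\<^sub>v v))" if v: "v \<in> carrier_vec n" for v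
  proof -
    have "(Jr n * Y * Jr n) *\<^sub>v v = (Jr n * Y) *\<^sub>v (Jr n *\<^sub>v v)" by (rule assoc_mult_mat_vec[OF JY Jr_carrier v])
    also have "\<dots> = Jr n *\<^sub>v (Y *\<^sub>v (Jr n *\<^sub>v v))" by (rule assoc_mult_mat_vec[OF Jr_carrier Y mult_mat_vec_carrier[OF Jr_carrier v]])
    finally show ?thesis .
  qed
  have z: "Jr n *\<^sub>v w = 0\<^sub>v n \<longleftrightarrow> w = 0\<^sub>v n" if w: "w \<in> carrier_vec n" for w
  proof
    assume "Jr n *\<^sub>v w = 0\<^sub>v n"
    hence "Jr n *\<^sub>v (Jr n *\<^sub>v w) = Jr n *\<^sub>v 0\<^sub>v n" by simp
    thus "w = 0\<^sub>v n" unfolding JJv[OF w] J0 .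
  qed (simp add: J0)
  have "v \<in> mat_kernel (Jr n * Y * Jr n) \<longleftrightarrow> v \<in> carrier_vec n \<and> Jr n *\<^sub>v v \<in> mat_kernel Y" for v
  proof (cases "v \<in> carrier_vec n")
    case True
    have Jv: "Jr n *\<^sub>v v \<in> carrier_vec n" using mult_mat_vec_carrier[OF Jr_carrier True] .
    have YJv: "Y *\<^sub>v (Jr n *\<^sub>v v) \<in> carrier_vec n" using mult_mat_vec_carrier[OF Y Jv] .
    show ?thesis unfolding mat_kernel[OF JYJ] mat_kernel[OF Y] using eq[OF True] z[OF YJv] True Jv by auto
  next
    case False thus ?thesis unfolding mat_kernel[OF JYJ] by auto
  qed
  thus ?thesis by auto
qed

lemma J_pow:
  assumes Y: "Y \<in> carrier_mat n n"
  shows "(Jr n * Y * Jr n) ^\<^sub>m k = Jr n * (Y ^\<^sub>m k) * Jr n"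
proof (induction k)
  case 0
  show ?case using Y JJ[of n] by simp
next
  case (Suc k)
  have Yk: "Y ^\<^sub>m k \<in> carrier_mat n n" using Y by simp
  have J: "Jr n \<in> carrier_mat n n" by simp
  have JYk: "Jr n * Y ^\<^sub>m k \<in> carrier_mat n n" using mult_carrier_mat[OF J Yk] .
  have JY: "Jr n * Y \<in> carrier_mat n n" using mult_carrier_mat[OF J Y] .
  have YJ: "Y * Jr n \<in> carrier_mat n n" using mult_carrier_mat[OF Y J] .
  have JJY: "Jr n * (Jr n * Y * Jr n) = Y * Jr n"
  proof -
    have "Jr n * (Jr n * Y * Jr n) = Jr n * (Jr n * Y) * Jr n" using nassoc[OF J JY J] by simp
    also have "Jr n * (Jr n * Y) = (Jr n * Jr n) * Y" using nassoc[OF J J Y] by simp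
    also have "\<dots> = Y" unfolding JJ using Y by simp
    finally show ?thesis .
  qed
  have "(Jr n * Y * Jr n) ^\<^sub>m Suc k = (Jr n * (Y ^\<^sub>m k) * Jr n) * (Jr n * Y * Jr n)" using Suc by simp
  also have "\<dots> = (Jr n * Y ^\<^sub>m k) * (Jr n * (Jr n * Y * Jr n))"
    by (rule nassoc[OF JYk J JYJ_carrier[OF Y]])
  also have "\<dots> = (Jr n * Y ^\<^sub>m k) * (Y * Jr n)" unfolding JJY ..
  also have "\<dots> = Jr n * (Y ^\<^sub>m k * (Y * Jr n))" by (rule nassoc[OF J Yk YJ])
  also have "Y ^\<^sub>m k * (Y * Jr n) = (Y ^\<^sub>m k * Y) * Jr n" by (rule nassoc[OF Yk Y J, symmetric])
  also have "Jr n * ((Y ^\<^sub>m k * Y) * Jr n) = Jr n * (Y ^\<^sub>m k * Y) * Jr n"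
    by (rule nassoc[OF J mult_carrier_mat[OF Yk Y] J, symmetric])
  also have "Y ^\<^sub>m k * Y = Y ^\<^sub>m Suc k" by simp
  finally show ?case .
qed

lemma smult_pow:
  fixes Y :: "complex mat"
  assumes Y: "Y \<in> carrier_mat n n"
  shows "(c \<cdot>\<^sub>m Y) ^\<^sub>m k = (c ^ k) \<cdot>\<^sub>m (Y ^\<^sub>m k)"
proof (induction k)
  case 0 show ?case using Y by (auto intro!: eq_matI)
next
  case (Suc k)
  have Yk: "Y ^\<^sub>m k \<in> carrier_mat n n" using Y by simp
  have "(c \<cdot>\<^sub>m Y) ^\<^sub>m Suc k = ((c ^ k) \<cdot>\<^sub>m (Y ^\<^sub>m k)) * (c \<cdot>\<^sub>m Y)" using Suc by simp
  also have "\<dots> = (c ^ k) \<cdot>\<^sub>m (Y ^\<^sub>m k * (c \<cdot>\<^sub>m Y))"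
    by (rule mult_smult_assoc_mat[OF Yk smult_carrier_mat[OF Y]])
  also have "Y ^\<^sub>m k * (c \<cdot>\<^sub>m Y) = c \<cdot>\<^sub>m (Y ^\<^sub>m k * Y)" by (rule mult_smult_distrib[OF Yk Y])
  also have "(c ^ k) \<cdot>\<^sub>m (c \<cdot>\<^sub>m (Y ^\<^sub>m k * Y)) = (c ^ Suc k) \<cdot>\<^sub>m (Y ^\<^sub>m Suc k)"
    by (rule eq_matI) (auto simp: mult.commute)
  finally show ?case .
qed

lemma mat_kernel_smult:
  fixes X :: "complex mat"
  assumes X: "X \<in> carrier_mat n n" and c: "c \<noteq> 0"
  shows "mat_kernel (c \<cdot>\<^sub>m X) = mat_kernel X"
proof -
  have cX: "c \<cdot>\<^sub>m X \<in> carrier_mat n n" using X by simp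
  have eq: "(c \<cdot>\<^sub>m X) *\<^sub>v v = 0\<^sub>v n \<longleftrightarrow> X *\<^sub>v v = 0\<^sub>v n" if v: "v \<in> carrier_vec n" for v
  proof
    assume a: "(c \<cdot>\<^sub>m X) *\<^sub>v v = 0\<^sub>v n"
    show "X *\<^sub>v v = 0\<^sub>v n"
    proof (rule eq_vecI)
      fix i assume "i < dim_vec (0\<^sub>v n :: complex vec)"
      hence i: "i < n" by simp
      have "((c \<cdot>\<^sub>m X) *\<^sub>v v) $ i = 0" using a i by simp
      hence "c * (X *\<^sub>v v) $ i = 0" using X v i by (simp add: mult_vec_entry sum_distrib_left mult.assoc)
      thus "(X *\<^sub>v v) $ i = (0\<^sub>v n :: complex vec) $ i" using c i by simp
    qed (use X in simp)
  next
    assume a: "X *\<^sub>v v = 0\<^sub>v n"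
    show "(c \<cdot>\<^sub>m X) *\<^sub>v v = 0\<^sub>v n"
    proof (rule eq_vecI)
      fix i assume "i < dim_vec (0\<^sub>v n :: complex vec)"
      hence i: "i < n" by simp
      have "(X *\<^sub>v v) $ i = 0" using a i by simp
      hence "c * (X *\<^sub>v v) $ i = 0" by simp
      thus "((c \<cdot>\<^sub>m X) *\<^sub>v v) $ i = (0\<^sub>v n :: complex vec) $ i"
        using X v i by (simp add: mult_vec_entry sum_distrib_left mult.assoc)
    qed (use X in simp)
  qed
  show ?thesis unfolding mat_kernel[OF cX] mat_kernel[OF X] using eq by auto
qed

lemma char_J:
  assumes A: "A \<in> carrier_mat n n"
  shows "char_matrix (Jr n * A * Jr n) e = Jr n * char_matrix A e * Jr n"
proof (rule eq_matI)
  fix i j assume ij: "i < dim_row (Jr n * char_matrix A e * Jr n)" "j < dim_col (Jr n * char_matrix A e * Jr n)"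
  hence i: "i < n" and j: "j < n" using A by auto
  have C: "char_matrix A e \<in> carrier_mat n n" using A by simp
  show "char_matrix (Jr n * A * Jr n) e $$ (i,j) = (Jr n * char_matrix A e * Jr n) $$ (i,j)"
    unfolding JAJ[OF C i j] using JAJ[OF A i j] i j A by (auto simp: char_matrix_def)
qed (use A in auto)

lemma char_neg:
  fixes B :: "complex mat"
  assumes B: "B \<in> carrier_mat n n"
  shows "char_matrix ((-1) \<cdot>\<^sub>m B) (- mu) = (-1) \<cdot>\<^sub>m char_matrix B mu"
  by (rule eq_matI) (use B in \<open>auto simp: char_matrix_def\<close>)

lemma eigenvalue_J:
  assumes A: "A \<in> carrier_mat n n"
  shows "eigenvalue (Jr n * A * Jr n) e \<longleftrightarrow> eigenvalue A e"
proof -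
  have JAJ: "Jr n * A * Jr n \<in> carrier_mat n n" using JYJ_carrier[OF A] .
  have C: "char_matrix A e \<in> carrier_mat n n" using A by simp
  have J: "Jr n \<in> carrier_mat n n" by simp
  have JC: "Jr n * char_matrix A e \<in> carrier_mat n n" using mult_carrier_mat[OF J C] .
  have dJ: "det (Jr n) * det (Jr n) = 1" using det_mult[OF J J] JJ[of n] by simp
  have "det (char_matrix (Jr n * A * Jr n) e) = det (Jr n) * det (char_matrix A e) * det (Jr n)"
    unfolding char_J[OF A] det_mult[OF JC J] det_mult[OF J C] ..
  also have "\<dots> = det (char_matrix A e)" using dJ by (simp add: algebra_simps)
  finally show ?thesis unfolding eigenvalue_det[OF JAJ] eigenvalue_det[OF A] by simp
qed

lemma eigenvalue_neg:
  fixes B :: "complex mat"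
  assumes B: "B \<in> carrier_mat n n"
  shows "eigenvalue ((-1) \<cdot>\<^sub>m B) (- mu) \<longleftrightarrow> eigenvalue B mu"
proof -
  have nB: "(-1) \<cdot>\<^sub>m B \<in> carrier_mat n n" using smult_carrier_mat[OF B] .
  have C: "char_matrix B mu \<in> carrier_mat n n" using B by simp
  have dB: "dim_row B = n" using B by simp
  have "det (char_matrix ((-1) \<cdot>\<^sub>m B) (- mu)) = (-1) ^ n * det (char_matrix B mu)"
    unfolding char_neg[OF B] det_smult using C dB by simp
  thus ?thesis unfolding eigenvalue_det[OF nB] eigenvalue_det[OF B] by simp
qed

lemma good_transfer:
  assumes N: "1 \<le> N" and g: "good N h M"
  shows "good N (Jr (2*N) * h * Jr (2*N)) ((-1) \<cdot>\<^sub>m (Jr (2*N) * M * Jr (2*N)))"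
proof -
  let ?n = "2*N" let ?J = "Jr ?n"
  have h: "h \<in> carrier_mat ?n ?n" and M: "M \<in> carrier_mat ?n ?n" using g unfolding good_def by auto
  let ?h = "?J * h * ?J" and ?M = "(-1) \<cdot>\<^sub>m (?J * M * ?J)"
  have h': "?h \<in> carrier_mat ?n ?n" using JYJ_carrier[OF h] .
  have JMJ: "?J * M * ?J \<in> carrier_mat ?n ?n" using JYJ_carrier[OF M] .
  have M': "?M \<in> carrier_mat ?n ?n" using smult_carrier_mat[OF JMJ] .
  have eh: "eigenvalue ?h e \<longleftrightarrow> eigenvalue h e" for e by (rule eigenvalue_J[OF h])
  have eM: "eigenvalue ?M e \<longleftrightarrow> eigenvalue M (- e)" for e
    using eigenvalue_neg[OF JMJ, of "- e"] eigenvalue_J[OF M, of "- e"] by simp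
  have seteM: "{e. eigenvalue ?M e} = uminus ` {e. eigenvalue M e}"
    using eM by (auto simp: image_iff) (metis minus_minus)
  have "card {e. eigenvalue ?M e} = card {e. eigenvalue M e}"
    unfolding seteM by (rule card_image) (simp add: inj_on_def)
  hence cM: "card {e. eigenvalue ?M e} = 2" using g unfolding good_def by simp
  have ch: "card {e. eigenvalue ?h e} = 2" using eh g unfolding good_def by simp
  have sim: "similar_mat ?h h"
    unfolding similar_mat_def similar_mat_wit_def Let_def
    by (rule exI[of _ ?J], rule exI[of _ ?J]) (use h h' JJ in auto)
  have dims: "dim_gen_eigenspace ?h = dim_gen_eigenspace h" by (rule dim_gen_eigenspace_similar[OF sim])
  show ?thesis unfolding good_def
  proof (intro conjI allI impI)
    fix e assume "eigenvalue ?h e"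
    hence "eigenvalue h e" using eh by simp
    then obtain \<mu> where \<mu>: "eigenvalue M \<mu>"
      and K: "\<And>k. mat_kernel ((char_matrix M \<mu>) ^\<^sub>m k) = mat_kernel ((char_matrix h e) ^\<^sub>m k)"
      and d1: "dim_gen_eigenspace h e 1 = 1" and dN: "dim_gen_eigenspace h e (2*N) = N"
      using g unfolding good_def by blast
    have CM: "char_matrix M \<mu> \<in> carrier_mat ?n ?n" and Ch: "char_matrix h e \<in> carrier_mat ?n ?n"
      using M h by auto
    have K': "mat_kernel ((char_matrix ?M (- \<mu>)) ^\<^sub>m k) = mat_kernel ((char_matrix ?h e) ^\<^sub>m k)" for k
    proof -
      have "char_matrix ?M (- \<mu>) = (-1) \<cdot>\<^sub>m (?J * char_matrix M \<mu> * ?J)"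
        unfolding char_neg[OF JMJ] char_J[OF M] ..
      hence "(char_matrix ?M (- \<mu>)) ^\<^sub>m k = ((-1) ^ k) \<cdot>\<^sub>m (?J * (char_matrix M \<mu> ^\<^sub>m k) * ?J)"
        using smult_pow[OF JYJ_carrier[OF CM], of "-1" k] J_pow[OF CM, of k] by simp
      hence "mat_kernel ((char_matrix ?M (- \<mu>)) ^\<^sub>m k) = mat_kernel (((-1) ^ k) \<cdot>\<^sub>m (?J * (char_matrix M \<mu> ^\<^sub>m k) * ?J))"
        by simp
      also have "\<dots> = mat_kernel (?J * (char_matrix M \<mu> ^\<^sub>m k) * ?J)"
        by (rule mat_kernel_smult[OF JYJ_carrier[OF pow_carrier_mat[OF CM]]]) simp
      also have "\<dots> = mat_kernel (?J * (char_matrix h e ^\<^sub>m k) * ?J)"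
        unfolding mat_kernel_J[OF pow_carrier_mat[OF CM]] mat_kernel_J[OF pow_carrier_mat[OF Ch]] K ..
      also have "\<dots> = mat_kernel ((char_matrix ?h e) ^\<^sub>m k)"
        unfolding char_J[OF h] J_pow[OF Ch] ..
      finally show ?thesis .
    qed
    show "\<exists>\<mu>. eigenvalue ?M \<mu> \<and>
        (\<forall>k. mat_kernel ((char_matrix ?M \<mu>) ^\<^sub>m k) = mat_kernel ((char_matrix ?h e) ^\<^sub>m k)) \<and>
        dim_gen_eigenspace ?h e 1 = 1 \<and> dim_gen_eigenspace ?h e (2*N) = N"
      by (rule exI[of _ "- \<mu>"]) (use eM \<mu> K' d1 dN dims in auto)
  qed (use h' M' cM ch in auto)
qed

lemma Mcl_eq: "Mcl N u v = MG (2*N) (- \<i> * coth (u - v)) (\<i> * tanh v)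
   (- \<i> / (coth v * sinh (u - v) ^ 2)) (- \<i> / (tanh (u - v) * cosh v ^ 2))
   (- \<i> / (cosh v * sinh (u - v))) (lam_cl u v)"
proof (rule eq_matI)
  fix i j assume "i < dim_row (MG (2*N) (- \<i> * coth (u - v)) (\<i> * tanh v)
   (- \<i> / (coth v * sinh (u - v) ^ 2)) (- \<i> / (tanh (u - v) * cosh v ^ 2))
   (- \<i> / (cosh v * sinh (u - v))) (lam_cl u v))" "j < dim_col (MG (2*N) (- \<i> * coth (u - v)) (\<i> * tanh v)
   (- \<i> / (coth v * sinh (u - v) ^ 2)) (- \<i> / (tanh (u - v) * cosh v ^ 2))
   (- \<i> / (cosh v * sinh (u - v))) (lam_cl u v))"
  hence i: "i < 2*N" and j: "j < 2*N" by auto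
  have e: "Mcl N u v $$ (i,j) = (if Suc i = Suc j then (if odd (Suc j) then - \<i> * coth (u - v) else \<i> * tanh v)
     else if Suc j < Suc i \<and> even (Suc i - Suc j) then
       (let k = (Suc i - Suc j) div 2 in
        if odd (Suc j) then - \<i> * lam_cl u v ^ (k - 1) / (coth v * sinh (u - v) ^ 2)
        else - \<i> * lam_cl u v ^ (k - 1) / (tanh (u - v) * cosh v ^ 2))
     else if Suc j < Suc i \<and> odd (Suc i - Suc j) then
       (let k = (Suc i - Suc j + 1) div 2 in
        - \<i> * lam_cl u v ^ (k - 1) / (cosh v * sinh (u - v)))
     else 0)"
    unfolding Mcl_def mat1_def using i j by simp
  consider "i < j" | "i = j" | "j < i" "even (i - j)" | "j < i" "odd (i - j)" by linarith
  thus "Mcl N u v $$ (i,j) = MG (2*N) (- \<i> * coth (u - v)) (\<i> * tanh v)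
   (- \<i> / (coth v * sinh (u - v) ^ 2)) (- \<i> / (tanh (u - v) * cosh v ^ 2))
   (- \<i> / (cosh v * sinh (u - v))) (lam_cl u v) $$ (i,j)"
  proof cases
    case 1 thus ?thesis unfolding e using i j by simp
  next
    case 2 thus ?thesis unfolding e using i j by simp
  next
    case 3 thus ?thesis unfolding e using i j by (simp add: Let_def)
  next
    case 4
    then obtain t where t: "i - j = 2*t+1" by (metis oddE)
    have a: "(Suc i - Suc j + 1) div 2 - 1 = t" "(i - j - 1) div 2 = t" using t by auto
    show ?thesis unfolding e using i j 4 a by (simp add: Let_def)
  qed
qed (auto simp: Mcl_def mat1_def)

lemma par_rev: "(n::nat) = 2*N \<Longrightarrow> j < n \<Longrightarrow> even (n - 1 - j) \<longleftrightarrow> odd j"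
  by presburger

lemma hq_l_eq: "hq_l N u = Jr (2*N) * hR (2*N) (s_par u) * Jr (2*N)"
proof (rule eq_matI)
  fix i j assume "i < dim_row (Jr (2*N) * hR (2*N) (s_par u) * Jr (2*N))"
    "j < dim_col (Jr (2*N) * hR (2*N) (s_par u) * Jr (2*N))"
  hence i: "i < 2*N" and j: "j < 2*N" by auto
  have pi: "even (2*N - 1 - i) \<longleftrightarrow> odd i" and pj: "even (2*N - 1 - j) \<longleftrightarrow> odd j"
    using par_rev i j by auto
  show "hq_l N u $$ (i,j) = (Jr (2*N) * hR (2*N) (s_par u) * Jr (2*N)) $$ (i,j)"
    unfolding JAJ[OF hR_carrier i j] using i j pi pj
    by (simp add: hq_l_def mat1_def) (auto split: if_splits)
qed (auto simp: hq_l_def mat1_def)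

lemma hq_r_eq: "hq_r N u = Jr (2*N) * hL (2*N) (s_par u) * Jr (2*N)"
proof (rule eq_matI)
  fix i j assume "i < dim_row (Jr (2*N) * hL (2*N) (s_par u) * Jr (2*N))"
    "j < dim_col (Jr (2*N) * hL (2*N) (s_par u) * Jr (2*N))"
  hence i: "i < 2*N" and j: "j < 2*N" by auto
  have pi: "even (2*N - 1 - i) \<longleftrightarrow> odd i" and pj: "even (2*N - 1 - j) \<longleftrightarrow> odd j"
    using par_rev i j by auto
  show "hq_r N u $$ (i,j) = (Jr (2*N) * hL (2*N) (s_par u) * Jr (2*N)) $$ (i,j)"
    unfolding JAJ[OF hL_carrier i j] using i j pi pj
    by (simp add: hq_r_def mat1_def) (auto split: if_splits)
qed (auto simp: hq_r_def mat1_def)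

lemma Mq_eq: "Mq N u v = (-1) \<cdot>\<^sub>m (Jr (2*N) * Mcl N u (u - v) * Jr (2*N))"
proof (rule eq_matI)
  let ?G = "MG (2*N) (- \<i> * coth (u - (u - v))) (\<i> * tanh (u - v))
   (- \<i> / (coth (u - v) * sinh (u - (u - v)) ^ 2)) (- \<i> / (tanh (u - (u - v)) * cosh (u - v) ^ 2))
   (- \<i> / (cosh (u - v) * sinh (u - (u - v)))) (lam_cl u (u - v))"
  have G: "Mcl N u (u - v) = ?G" by (rule Mcl_eq)
  fix i j assume "i < dim_row ((-1) \<cdot>\<^sub>m (Jr (2*N) * Mcl N u (u - v) * Jr (2*N)))"
    "j < dim_col ((-1) \<cdot>\<^sub>m (Jr (2*N) * Mcl N u (u - v) * Jr (2*N)))"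
  hence i: "i < 2*N" and j: "j < 2*N" by auto
  have pi: "even (2*N - 1 - i) \<longleftrightarrow> odd i" and pj: "even (2*N - 1 - j) \<longleftrightarrow> odd j"
    using par_rev i j by auto
  have R: "((-1) \<cdot>\<^sub>m (Jr (2*N) * Mcl N u (u - v) * Jr (2*N))) $$ (i,j) = - (?G $$ (2*N - 1 - i, 2*N - 1 - j))"
    unfolding G using JAJ[OF MG_carrier i j] i j by simp
  have d: "(2*N - 1 - i) - (2*N - 1 - j) = j - i" using i j by auto
  have lt: "(2*N - 1 - i < 2*N - 1 - j) \<longleftrightarrow> j < i" "(2*N - 1 - i = 2*N - 1 - j) \<longleftrightarrow> i = j" using i j by auto
  have e: "Mq N u v $$ (i,j) = (if Suc i = Suc j then (if odd (Suc i) then - \<i> * tanh (u - v) else \<i> * coth v)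
     else if Suc i < Suc j \<and> even (Suc j - Suc i) then
       (let k = (Suc j - Suc i) div 2 in
        if odd (Suc i) then \<i> * lam_q u v ^ (k - 1) / (tanh v * cosh (u - v) ^ 2)
        else \<i> * lam_q u v ^ (k - 1) / (coth (u - v) * sinh v ^ 2))
     else if Suc i < Suc j \<and> odd (Suc j - Suc i) then
       (let k = (Suc j - Suc i + 1) div 2 in
        \<i> * lam_q u v ^ (k - 1) / (sinh v * cosh (u - v)))
     else 0)"
    unfolding Mq_def mat1_def using i j by simp
  have lq: "lam_cl u (u - v) = lam_q u v" unfolding lam_cl_def lam_q_def by simp
  have uv: "u - (u - v) = v" by simp
  consider "j < i" | "i = j" | "i < j" "even (j - i)" | "i < j" "odd (j - i)" by linarith
  thus "Mq N u v $$ (i,j) = ((-1) \<cdot>\<^sub>m (Jr (2*N) * Mcl N u (u - v) * Jr (2*N))) $$ (i,j)"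
  proof cases
    case 1 thus ?thesis unfolding e R using i j lt by simp
  next
    case 2 thus ?thesis unfolding e R using i j pi by (simp add: uv)
  next
    case 3
    have pij: "odd j \<longleftrightarrow> odd i" using 3 by presburger
    show ?thesis unfolding e R using i j 3 lt d pi pj pij by (auto simp: Let_def uv lq)
  next
    case 4
    then obtain t where t: "j - i = 2*t+1" by (metis oddE)
    have a: "(Suc j - Suc i + 1) div 2 - 1 = t" "(j - i - 1) div 2 = t" using t by auto
    show ?thesis unfolding e R using i j 4 a lt d by (auto simp: Let_def uv lq mult.commute)
  qed
qed (auto simp: Mq_def mat1_def)

section \<open>Hyperbolic identities\<close>

lemma t2:
  fixes sv cv sw cw :: complex
  assumes nz: "sv \<noteq> 0" "cv \<noteq> 0" "sw \<noteq> 0" "cw \<noteq> 0"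
    and pw: "cw^2 = sw^2 + 1"
  shows "- \<i> / ((cv / sv) * sw ^ 2) - (sv / cv * (cw / sw)) * (- \<i> * (cw / sw)) = \<i> * (sv / cv)"
proof -
  have "- \<i> / ((cv / sv) * sw ^ 2) - (sv / cv * (cw / sw)) * (- \<i> * (cw / sw)) = \<i> * (sv / cv) * ((cw^2 - 1) / sw^2)"
    using nz by (simp add: field_simps power2_eq_square)
  also have "cw^2 - 1 = sw^2" using pw by simp
  also have "sw^2 / sw^2 = 1" using nz by simp
  finally show ?thesis by simp
qed

lemma t2b:
  fixes sv cv sw cw :: complex
  assumes nz: "sv \<noteq> 0" "cv \<noteq> 0" "sw \<noteq> 0" "cw \<noteq> 0"
    and pv: "cv^2 = sv^2 + 1"
  shows "- \<i> / ((sw / cw) * cv ^ 2) - (sv / cv * (cw / sw)) * (\<i> * (sv / cv)) = - \<i> * (cw / sw)"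
proof -
  have "- \<i> / ((sw / cw) * cv ^ 2) - (sv / cv * (cw / sw)) * (\<i> * (sv / cv)) = - \<i> * (cw / sw) * ((1 + sv^2) / cv^2)"
    using nz by (simp add: field_simps power2_eq_square)
  also have "1 + sv^2 = cv^2" using pv by simp
  also have "cv^2 / cv^2 = 1" using nz by simp
  finally show ?thesis by simp
qed

lemma t5:
  fixes sv cv sw cw cu :: complex
  assumes nz: "sv \<noteq> 0" "cv \<noteq> 0" "sw \<noteq> 0" "cw \<noteq> 0" "cu \<noteq> 0"
    and CU: "cu = cw * cv + sw * sv"
  shows "\<i> * (sv / cv) - (- \<i> * (cw / sw)) = \<i> * cu / (cv * sw)"
  using nz unfolding CU by (simp add: field_simps)

lemma t1:
  fixes sv cv sw cw cu :: complex
  assumes nz: "sv \<noteq> 0" "cv \<noteq> 0" "sw \<noteq> 0" "cw \<noteq> 0" "cu \<noteq> 0"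
    and CU: "cu = cw * cv + sw * sv"
  shows "- \<i> / (cv * sw) = - (\<i> * (sv / cv) - (- \<i> * (cw / sw))) * (1 / cu)"
  unfolding t5[OF nz CU] using nz by (simp add: field_simps)

lemma t3:
  fixes sv cv sw cw cu su :: complex
  assumes nz: "sv \<noteq> 0" "cv \<noteq> 0" "sw \<noteq> 0" "cw \<noteq> 0" "cu \<noteq> 0"
    and pv: "cv^2 = sv^2 + 1" and pw: "cw^2 = sw^2 + 1" and CU: "cu = cw * cv + sw * sv"
    and SU: "su = sw * cv + cw * sv" and pu: "cu^2 = su^2 + 1"
  shows "(- \<i> * (cw / sw)) * (1 + sv / cv * (cw / sw)) + (\<i> * (sv / cv) - (- \<i> * (cw / sw))) * (1 - (1 / cu)^2)
     = - \<i> * su / (sw ^ 2 * cu)"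
proof -
  have e1: "1 + sv / cv * (cw / sw) = su / (cv * sw)" using nz unfolding SU by (simp add: field_simps)
  have e2: "1 - (1 / cu)^2 = su^2 / cu^2"
  proof -
    have "1 - (1 / cu)^2 = (cu^2 - 1) / cu^2" using nz by (simp add: field_simps)
    also have "cu^2 - 1 = su^2" using pu by simp
    finally show ?thesis .
  qed
  have e4: "cw * cu - su * sw = cv"
  proof -
    have "cw * cu - su * sw = (cw^2 - sw^2) * cv" unfolding CU SU by (simp add: algebra_simps power2_eq_square)
    thus ?thesis using pw by simp
  qed
  have "(- \<i> * (cw / sw)) * (1 + sv / cv * (cw / sw)) + (\<i> * (sv / cv) - (- \<i> * (cw / sw))) * (1 - (1 / cu)^2)
     = (- \<i> * (cw / sw)) * (su / (cv * sw)) + (\<i> * cu / (cv * sw)) * (su^2 / cu^2)"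
    unfolding e1 e2 t5[OF nz CU] ..
  also have "\<dots> = - \<i> * su * (cw * cu - su * sw) / (sw ^ 2 * cu * cv)"
    using nz by (simp add: field_simps power2_eq_square)
  also have "\<dots> = - \<i> * su / (sw ^ 2 * cu)" unfolding e4 using nz by (simp add: field_simps)
  finally show ?thesis .
qed

lemma t4:
  fixes sv cv sw cw cu su :: complex
  assumes nz: "sv \<noteq> 0" "cv \<noteq> 0" "sw \<noteq> 0" "cw \<noteq> 0" "cu \<noteq> 0"
    and pv: "cv^2 = sv^2 + 1" and pw: "cw^2 = sw^2 + 1" and CU: "cu = cw * cv + sw * sv"
    and SU: "su = sw * cv + cw * sv" and pu: "cu^2 = su^2 + 1"
  shows "(\<i> * (sv / cv) - (- \<i> * (cw / sw))) * (1 - (1 / cu)^2) - (\<i> * (sv / cv)) * (1 + sv / cv * (cw / sw))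
     = \<i> * su / (cv ^ 2 * cu)"
proof -
  have e1: "1 + sv / cv * (cw / sw) = su / (cv * sw)" using nz unfolding SU by (simp add: field_simps)
  have e2: "1 - (1 / cu)^2 = su^2 / cu^2"
  proof -
    have "1 - (1 / cu)^2 = (cu^2 - 1) / cu^2" using nz by (simp add: field_simps)
    also have "cu^2 - 1 = su^2" using pu by simp
    finally show ?thesis .
  qed
  have e4: "su * cv - sv * cu = sw"
  proof -
    have "su * cv - sv * cu = (cv^2 - sv^2) * sw" unfolding CU SU by (simp add: algebra_simps power2_eq_square)
    thus ?thesis using pv by simp
  qed
  have "(\<i> * (sv / cv) - (- \<i> * (cw / sw))) * (1 - (1 / cu)^2) - (\<i> * (sv / cv)) * (1 + sv / cv * (cw / sw))
     = (\<i> * cu / (cv * sw)) * (su^2 / cu^2) - (\<i> * (sv / cv)) * (su / (cv * sw))"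
    unfolding e1 e2 t5[OF nz CU] ..
  also have "\<dots> = \<i> * su * (su * cv - sv * cu) / (cv ^ 2 * cu * sw)"
    using nz by (simp add: field_simps power2_eq_square)
  also have "\<dots> = \<i> * su / (cv ^ 2 * cu)" unfolding e4 using nz by (simp add: field_simps)
  finally show ?thesis .
qed

definition gen_ok :: "complex \<Rightarrow> complex \<Rightarrow> bool" where
  "gen_ok u v \<longleftrightarrow> sinh u \<noteq> 0 \<and> cosh u \<noteq> 0 \<and> sinh v \<noteq> 0 \<and> cosh v \<noteq> 0 \<and> sinh (u - v) \<noteq> 0 \<and> cosh (u - v) \<noteq> 0"

lemma good_cl:
  assumes N: "1 \<le> N" and g: "gen_ok u v"
  shows "good N (hL (2*N) (s_par u)) (Mcl N u v)" "good N (hR (2*N) (s_par u)) (Mcl N u v)"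
proof -
  define sv where "sv = sinh v" define cv where "cv = cosh v"
  define sw where "sw = sinh (u - v)" define cw where "cw = cosh (u - v)"
  define su where "su = sinh u" define cu where "cu = cosh u"
  have nz: "sv \<noteq> 0" "cv \<noteq> 0" "sw \<noteq> 0" "cw \<noteq> 0" "cu \<noteq> 0" "su \<noteq> 0"
    using g unfolding gen_ok_def sv_def cv_def sw_def cw_def su_def cu_def by auto
  have uw: "u = (u - v) + v" by simp
  have SU: "su = sw * cv + cw * sv" unfolding su_def sw_def cv_def cw_def sv_def
    by (subst uw, subst sinh_add) simp
  have CU: "cu = cw * cv + sw * sv" unfolding cu_def sw_def cv_def cw_def sv_def
    by (subst uw, subst cosh_add) simp
  have pv: "cv^2 = sv^2 + 1" unfolding cv_def sv_def by (rule cosh_square_eq)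
  have pw: "cw^2 = sw^2 + 1" unfolding cw_def sw_def by (rule cosh_square_eq)
  have pu: "cu^2 = su^2 + 1" unfolding cu_def su_def by (rule cosh_square_eq)
  define al where "al = - \<i> * coth (u - v)"
  define be where "be = \<i> * tanh v"
  define A where "A = - \<i> / (coth v * sinh (u - v) ^ 2)"
  define D where "D = - \<i> / (tanh (u - v) * cosh v ^ 2)"
  define C where "C = - \<i> / (cosh v * sinh (u - v))"
  define lam where "lam = lam_cl u v"
  define s where "s = s_par u"
  have al: "al = - \<i> * (cw / sw)" unfolding al_def coth_def cw_def sw_def ..
  have be: "be = \<i> * (sv / cv)" unfolding be_def tanh_def sv_def cv_def ..
  have A: "A = - \<i> / ((cv / sv) * sw ^ 2)" unfolding A_def coth_def cv_def sv_def sw_def ..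
  have D: "D = - \<i> / ((sw / cw) * cv ^ 2)" unfolding D_def tanh_def cw_def sw_def cv_def ..
  have C: "C = - \<i> / (cv * sw)" unfolding C_def cv_def sw_def ..
  have lam: "lam = sv / cv * (cw / sw)" unfolding lam_def lam_cl_def tanh_def coth_def sv_def cv_def cw_def sw_def ..
  have s: "s = 1 / cu" unfolding s_def s_par_def cu_def ..
  have iC: "C = - (be - al) * s" unfolding C al be s using t1[OF nz(1-5) CU] .
  have iC': "C = (al - be) * s" using iC by (simp add: algebra_simps)
  have iA: "A - lam * al = be" unfolding A lam al be using t2[OF nz(1-4) pw] .
  have iD: "D - lam * be = al" unfolding D lam al be using t2b[OF nz(1-4) pv] .
  have ab: "be \<noteq> al"
  proof -
    have "be - al = \<i> * cu / (cv * sw)" unfolding al be using t5[OF nz(1-5) CU] .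
    thus ?thesis using nz by auto
  qed
  have QA: "al * (1 + lam) + (be - al) * (1 - s^2) \<noteq> 0"
  proof -
    have "al * (1 + lam) + (be - al) * (1 - s^2) = - \<i> * su / (sw ^ 2 * cu)"
      unfolding al be lam s using t3[OF nz(1-5) pv pw CU SU pu] .
    thus ?thesis using nz by auto
  qed
  have QB: "(be - al) * (1 - s^2) - be * (1 + lam) \<noteq> 0"
  proof -
    have "(be - al) * (1 - s^2) - be * (1 + lam) = \<i> * su / (cv ^ 2 * cu)"
      unfolding al be lam s using t4[OF nz(1-5) pv pw CU SU pu] .
    thus ?thesis using nz by auto
  qed
  have s0: "s \<noteq> 0" unfolding s using nz by simp
  have s2: "s^2 \<noteq> 1"
  proof
    assume "s^2 = 1"
    hence "cu^2 = 1" unfolding s using nz by (simp add: field_simps)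
    thus False using pu nz by simp
  qed
  have M: "Mcl N u v = MG (2*N) al be A D C lam"
    unfolding Mcl_eq al_def be_def A_def D_def C_def lam_def ..
  show "good N (hL (2*N) (s_par u)) (Mcl N u v)"
    unfolding M s_def[symmetric] by (rule good_hL[OF refl N s0 s2 iC iA iD ab QA QB])
  show "good N (hR (2*N) (s_par u)) (Mcl N u v)"
    unfolding M s_def[symmetric] by (rule good_hR[OF refl N s0 s2 iC' iA iD ab QA QB])
qed

section \<open>Genericity\<close>

lemma Re_zero_of_sinh_cosh:
  fixes w :: complex
  assumes "sinh w = 0 \<or> cosh w = 0"
  shows "Re w = 0"
proof -
  have "exp w - exp (- w) = 0 \<or> exp w + exp (- w) = 0"
    using assms unfolding sinh_field_def cosh_field_def by auto
  hence D: "exp w = exp (- w) \<or> exp w = - exp (- w)" by (auto simp: eq_neg_iff_add_eq_0)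
  have nrm: "norm (exp w) = norm (exp (- w))"
    using D by (elim disjE) (simp_all only: norm_minus_cancel)
  have "exp (Re w) = exp (- Re w)" using nrm unfolding norm_exp_eq_Re by simp
  hence "Re w = - Re w" by (simp only: exp_inj_iff)
  thus ?thesis by simp
qed

definition Sbad :: "(complex \<times> complex) set" where
  "Sbad = {p. sinh (fst p) * cosh (fst p) * sinh (snd p) * cosh (snd p) * sinh (fst p - snd p) * cosh (fst p - snd p) = 0}"

lemma Sbad_closed: "closed Sbad"
  unfolding Sbad_def
  by (rule closed_Collect_eq) (intro continuous_intros)+

lemma interior_Re_line:
  fixes f :: "complex \<times> complex \<Rightarrow> complex"
  assumes shift: "\<And>p e. e > 0 \<Longrightarrow> \<exists>q. dist q p < e \<and> Re (f q) \<noteq> Re (f p)"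
  shows "interior {p. Re (f p) = 0} = {}"
proof (rule ccontr)
  assume "interior {p. Re (f p) = 0} \<noteq> {}"
  then obtain p where p: "p \<in> interior {p. Re (f p) = 0}" by auto
  then obtain T where T: "open T" "p \<in> T" "T \<subseteq> {p. Re (f p) = 0}" by (meson interiorE)
  obtain e where e: "e > 0" "\<And>y. dist y p < e \<Longrightarrow> y \<in> T" using T(1,2) unfolding open_dist by blast
  have p0: "Re (f p) = 0" using T by auto
  obtain q where q: "dist q p < e" "Re (f q) \<noteq> Re (f p)" using shift[OF e(1)] by blast
  have "Re (f q) = 0" using e(2)[OF q(1)] T(3) by auto
  thus False using q p0 by simp
qed

lemma shift_fst:
  fixes p :: "complex \<times> complex"
  assumes "e > 0"
  shows "dist (fst p + of_real (e/2), snd p) p < e"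
  using assms by (cases p) (simp add: dist_Pair_Pair dist_norm)

lemma shift_snd:
  fixes p :: "complex \<times> complex"
  assumes "e > 0"
  shows "dist (fst p, snd p + of_real (e/2)) p < e"
  using assms by (cases p) (simp add: dist_Pair_Pair dist_norm)

lemma closed_Re_zero:
  fixes f :: "complex \<times> complex \<Rightarrow> complex"
  assumes "continuous_on UNIV f"
  shows "closed {p. Re (f p) = 0}"
  by (rule closed_Collect_eq) (auto intro!: continuous_intros assms)

lemma Sbad_interior: "interior Sbad = {}"
proof -
  let ?A = "{p :: complex \<times> complex. Re (fst p) = 0}"
  let ?B = "{p :: complex \<times> complex. Re (snd p) = 0}"
  let ?C = "{p :: complex \<times> complex. Re (fst p - snd p) = 0}"
  have sub: "Sbad \<subseteq> ?A \<union> ?B \<union> ?C"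
  proof
    fix p assume "p \<in> Sbad"
    hence "sinh (fst p) = 0 \<or> cosh (fst p) = 0 \<or> sinh (snd p) = 0 \<or> cosh (snd p) = 0 \<or>
      sinh (fst p - snd p) = 0 \<or> cosh (fst p - snd p) = 0" unfolding Sbad_def by auto
    thus "p \<in> ?A \<union> ?B \<union> ?C" using Re_zero_of_sinh_cosh by blast
  qed
  have iA: "interior ?A = {}"
    by (rule interior_Re_line) (use shift_fst in \<open>force\<close>)
  have iB: "interior ?B = {}"
    by (rule interior_Re_line) (use shift_snd in \<open>force\<close>)
  have iC: "interior ?C = {}"
    by (rule interior_Re_line) (use shift_fst in \<open>force\<close>)
  have cA: "closed ?A" by (rule closed_Re_zero) (intro continuous_intros)
  have cB: "closed ?B" by (rule closed_Re_zero) (intro continuous_intros)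
  have "interior (?A \<union> ?B \<union> ?C) = interior (?A \<union> ?B)"
    by (rule interior_closed_Un_empty_interior[OF closed_Un[OF cA cB] iC])
  also have "\<dots> = interior ?A" by (rule interior_closed_Un_empty_interior[OF cA iB])
  finally have "interior (?A \<union> ?B \<union> ?C) = {}" using iA by simp
  thus ?thesis using interior_mono[OF sub] by auto
qed

lemma notin_Sbad: "(u, v) \<notin> Sbad \<Longrightarrow> gen_ok u v \<and> gen_ok u (u - v)"
  unfolding Sbad_def gen_ok_def by auto

theorem mainTheorem3:
  fixes N :: nat
  assumes "N \<ge> 1"
  shows "generic2 (\<lambda>u v.
           root_match N (hcl_l N u) (Mcl N u v) \<and> root_match N (hcl_r N u) (Mcl N u v) \<and>
           root_match N (hq_l N u) (Mq N u v) \<and> root_match N (hq_r N u) (Mq N u v))"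
  unfolding generic2_def
proof (intro exI[of _ Sbad] conjI allI impI)
  show "closed Sbad" by (rule Sbad_closed)
  show "interior Sbad = {}" by (rule Sbad_interior)
  fix u v assume "(u, v) \<notin> Sbad"
  hence g1: "gen_ok u v" and g2: "gen_ok u (u - v)" using notin_Sbad by auto
  have N: "1 \<le> N" using assms by simp
  note c1 = good_cl[OF N g1] and c2 = good_cl[OF N g2]
  show "root_match N (hcl_l N u) (Mcl N u v)"
    unfolding hcl_l_eq by (rule good_root_match[OF N c1(1)])
  show "root_match N (hcl_r N u) (Mcl N u v)"
    unfolding hcl_r_eq by (rule good_root_match[OF N c1(2)])
  show "root_match N (hq_l N u) (Mq N u v)"
    unfolding hq_l_eq Mq_eq by (rule good_root_match[OF N good_transfer[OF N c2(2)]])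
  show "root_match N (hq_r N u) (Mq N u v)"
    unfolding hq_r_eq Mq_eq by (rule good_root_match[OF N good_transfer[OF N c2(1)]])
qed


end
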